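(* For a $(2n+1)$-dimensional almost paracontact metric manifold $(M,\varphi,\xi,\eta,g)$, the vector field $\xi$ is Killing if and only if at every point the structure tensor lies in $\mathbb G_1\oplus\mathbb G_2\oplus\mathbb G_3\oplus\mathbb G_4\oplus\mathbb G_5\oplus\mathbb G_8\oplus\mathbb G_9\oplus\mathbb G_{11}$, i.e. $F^6=F^7=F^{10}=F^{12}=0$.
   Context: STRUCTURE. An almost paracontact metric manifold $(M,\varphi,\xi,\eta,g)$ of dimension $2n+1$ ($n\ge1$) is a smooth manifold with a $(1,1)$-tensor field $\varphi$, a vector field $\xi$, a 1-form $\eta$ and a pseudo-Riemannian metric $g$ such that $\varphi^2=\mathrm{id}-\eta\otimes\xi$, $\eta(\xi)=1$, $\varphi\xi=0$ and $g(\varphi x,\varphi y)=-g(x,y)+\eta(x)\eta(y)$; then $\eta(x)=g(x,\xi)$, $\eta\circ\varphi=0$ and $\mathbb D=\ker\eta$ is a non-degenerate distribution of rank $2n$. The fundamental 2-form is $\phi(x,y)=g(\varphi x,y)$, $\nabla$ is the Levi-Civita connection of $g$, and the structure tensor is $F(x,y,z)=(\nabla_x\phi)(y,z)=g((\nabla_x\varphi)y,z)$. For a $(0,3)$-tensor $F$ at a point, $\theta_F(x)=\sum_{i,j=1}^{2n}g^{ij}F(e_i,e_j,x)$, $\theta^*_F(x)=\sum_{i,j=1}^{2n}g^{ij}F(e_i,\varphi e_j,x)$, where $e_1,\dots,e_{2n}$ is a basis of $\mathbb D_p$ and $(g^{ij})$ the inverse of $(g(e_i,e_j))$. CLASSES.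 At a point $p$, with $V=T_pM$ and $h=\varphi^2$, let $\mathcal F$ be the space of $(0,3)$-tensors $F$ on $V$ with $F(x,y,z)=-F(x,z,y)=F(x,\varphi y,\varphi z)-\eta(y)F(x,z,\xi)+\eta(z)F(x,y,\xi)$; the structure tensor lies in $\mathcal F$. Subspaces of $\mathcal F$ (conditions for all $x,y,z$): $\mathbb G_1$: $F(x,y,z)=\frac{1}{2(n-1)}\{g(x,\varphi y)\theta_F(\varphi z)-g(x,\varphi z)\theta_F(\varphi y)-g(\varphi x,\varphi y)\theta_F(hz)+g(\varphi x,\varphi z)\theta_F(hy)\}$ (for $n=1$, $\mathbb G_1=\{0\}$); $\mathbb G_2$: $F(\varphi x,\varphi y,z)=-F(x,y,z)$ and $\theta_F=0$; with $\mathcal F_3=\{F\in\mathcal F:F(\varphi x,\varphi y,z)=F(x,y,z)\}$: $\mathbb G_3=\{F\in\mathcal F_3:F(x,y,z)=-F(y,x,z)\}$, $\mathbb G_4=\{F\in\mathcal F_3:F(x,y,z)+F(y,z,x)+F(z,x,y)=0\}$; $\mathbb G_5$: $F(x,y,z)=\frac{\theta_F(\xi)}{2n}\{\eta(y)g(\varphi x,\varphi z)-\eta(z)g(\varphi x,\varphi y)\}$; $\mathbb G_6$: $F(x,y,z)=-\frac{\theta^*_F(\xi)}{2n}\{\eta(y)g(x,\varphi z)-\eta(z)g(x,\varphi y)\}$; $\mathbb G_7$: $F(x,y,z)=-\eta(y)F(x,z,\xi)+\eta(z)F(x,y,\xi)$, $F(x,y,\xi)=-F(y,x,\xi)=-F(\varphi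 x,\varphi y,\xi)$, $\theta^*_F(\xi)=0$; $\mathbb G_8$: $F(x,y,z)=-\eta(y)F(x,z,\xi)+\eta(z)F(x,y,\xi)$, $F(x,y,\xi)=F(y,x,\xi)=-F(\varphi x,\varphi y,\xi)$, $\theta_F(\xi)=0$; $\mathbb G_9$: $F(x,y,z)=-\eta(y)F(x,z,\xi)+\eta(z)F(x,y,\xi)$, $F(x,y,\xi)=-F(y,x,\xi)=F(\varphi x,\varphi y,\xi)$; $\mathbb G_{10}$: $F(x,y,z)=-\eta(y)F(x,z,\xi)+\eta(z)F(x,y,\xi)$, $F(x,y,\xi)=F(y,x,\xi)=F(\varphi x,\varphi y,\xi)$; $\mathbb G_{11}$: $F(x,y,z)=\eta(x)F(\xi,\varphi y,\varphi z)$; $\mathbb G_{12}$: $F(x,y,z)=\eta(x)\{\eta(y)F(\xi,\xi,z)-\eta(z)F(\xi,\xi,y)\}$. One has $\mathcal F=\mathbb G_1\oplus\cdots\oplus\mathbb G_{12}$; for $F\in\mathcal F$ write $F=\sum_{i=1}^{12}F^i$ with $F^i\in\mathbb G_i$. $M$ belongs to the class $\mathbb G_{i_1}\oplus\cdots\oplus\mathbb G_{i_k}$ if at every point its structure tensor lies in that subspace. $\xi$ is Killing if $\mathcal L_\xi g=0$. *)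

theory Defs
  imports "HOL-Analysis.Analysis"
begin

text \<open>Local (chart) model: the manifold is an open set U of the coordinate space real^('m::finite),
 tangent vectors at every point are elements of real^('m::finite); tensor fields are given
 pointwise as multilinear maps on real^('m::finite).\<close>

type_synonym 'm tens3 = "real^'m \<Rightarrow> real^'m \<Rightarrow> real^'m \<Rightarrow> real"

fun Ck_on :: "nat \<Rightarrow> (real^('m::finite)) set \<Rightarrow> (real^('m::finite) \<Rightarrow> real) \<Rightarrow> bool" where
  "Ck_on 0 U f = continuous_on U f"
| "Ck_on (Suc k) U f = (f differentiable_on U \<and>
      (\<forall>i. Ck_on k U (\<lambda>p. frechet_derivative f (at p) (axis i 1))))"

definition smooth_on :: "(real^('m::finite)) set \<Rightarrow> (real^('m::finite) \<Rightarrow> real) \<Rightarrow> bool" where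
  "smooth_on U f \<longleftrightarrow> (\<forall>k. Ck_on k U f)"

definition dd :: "(real^('m::finite) \<Rightarrow> 'b::real_normed_vector) \<Rightarrow> real^('m::finite) \<Rightarrow> real^('m::finite) \<Rightarrow> 'b" where
  "dd f p v = frechet_derivative f (at p) v"

definition bilinear_form :: "(real^('m::finite) \<Rightarrow> real^('m::finite) \<Rightarrow> real) \<Rightarrow> bool" where
  "bilinear_form b \<longleftrightarrow> (\<forall>y. linear (\<lambda>x. b x y)) \<and> (\<forall>x. linear (\<lambda>y. b x y))"

definition trilinear :: "('m::finite) tens3 \<Rightarrow> bool" where
  "trilinear F \<longleftrightarrow> (\<forall>y z. linear (\<lambda>x. F x y z)) \<and> (\<forall>x z. linear (\<lambda>y. F x y z))
     \<and> (\<forall>x y. linear (\<lambda>z. F x y z))"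

definition apcm_point ::
  "(real^('m::finite) \<Rightarrow> real^('m::finite) \<Rightarrow> real) \<Rightarrow> (real^('m::finite) \<Rightarrow> real^('m::finite)) \<Rightarrow> real^('m::finite) \<Rightarrow> (real^('m::finite) \<Rightarrow> real) \<Rightarrow> bool" where
  "apcm_point g phi xi eta \<longleftrightarrow>
     bilinear_form g \<and> (\<forall>x y. g x y = g y x) \<and> (\<forall>x. (\<forall>y. g x y = 0) \<longrightarrow> x = 0) \<and>
     linear phi \<and> linear eta \<and>
     (\<forall>x. phi (phi x) = x - eta x *\<^sub>R xi) \<and> eta xi = 1 \<and> phi xi = 0 \<and>
     (\<forall>x y. g (phi x) (phi y) = - g x y + eta x * eta y)"

definition Dbasis :: "nat \<Rightarrow> (real^('m::finite) \<Rightarrow> real) \<Rightarrow> (nat \<Rightarrow> real^('m::finite)) \<Rightarrow> bool" where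
  "Dbasis n eta e \<longleftrightarrow> (\<forall>i<2*n. eta (e i) = 0) \<and> inj_on e {..<2*n} \<and> independent (e ` {..<2*n})"

definition ginv :: "nat \<Rightarrow> (real^('m::finite) \<Rightarrow> real^('m::finite) \<Rightarrow> real) \<Rightarrow> (nat \<Rightarrow> real^('m::finite)) \<Rightarrow> nat \<Rightarrow> nat \<Rightarrow> real" where
  "ginv n g e = (SOME gi. \<forall>i<2*n. \<forall>j<2*n.
       (\<Sum>k<2*n. gi i k * g (e k) (e j)) = (if i = j then 1 else 0))"

definition theta ::
  "nat \<Rightarrow> (real^('m::finite) \<Rightarrow> real^('m::finite) \<Rightarrow> real) \<Rightarrow> (real^('m::finite) \<Rightarrow> real) \<Rightarrow> ('m::finite) tens3 \<Rightarrow> real^('m::finite) \<Rightarrow> real" where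
  "theta n g eta F x = (let e = (SOME e. Dbasis n eta e) in
      \<Sum>i<2*n. \<Sum>j<2*n. ginv n g e i j * F (e i) (e j) x)"

definition theta_star ::
  "nat \<Rightarrow> (real^('m::finite) \<Rightarrow> real^('m::finite) \<Rightarrow> real) \<Rightarrow> (real^('m::finite) \<Rightarrow> real^('m::finite)) \<Rightarrow> (real^('m::finite) \<Rightarrow> real)
     \<Rightarrow> ('m::finite) tens3 \<Rightarrow> real^('m::finite) \<Rightarrow> real" where
  "theta_star n g phi eta F x = (let e = (SOME e. Dbasis n eta e) in
      \<Sum>i<2*n. \<Sum>j<2*n. ginv n g e i j * F (e i) (phi (e j)) x)"

definition Fspace ::
  "(real^('m::finite) \<Rightarrow> real^('m::finite)) \<Rightarrow> real^('m::finite) \<Rightarrow> (real^('m::finite) \<Rightarrow> real) \<Rightarrow> ('m::finite) tens3 \<Rightarrow> bool" where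
  "Fspace phi xi eta F \<longleftrightarrow> trilinear F \<and>
     (\<forall>x y z. F x y z = - F x z y \<and>
        F x y z = F x (phi y) (phi z) - eta y * F x z xi + eta z * F x y xi)"

definition Gclass ::
  "nat \<Rightarrow> (real^('m::finite) \<Rightarrow> real^('m::finite) \<Rightarrow> real) \<Rightarrow> (real^('m::finite) \<Rightarrow> real^('m::finite)) \<Rightarrow> real^('m::finite) \<Rightarrow> (real^('m::finite) \<Rightarrow> real)
     \<Rightarrow> nat \<Rightarrow> ('m::finite) tens3 \<Rightarrow> bool" where
  "Gclass n g phi xi eta i F \<longleftrightarrow> Fspace phi xi eta F \<and>
    (let th = theta n g eta F; ths = theta_star n g phi eta F; h = (\<lambda>z. phi (phi z)) in
    (if i = 1 then
       (if n = 1 then (\<forall>x y z. F x y z = 0) else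
        (\<forall>x y z. F x y z = 1 / (2 * (real n - 1)) *
          (g x (phi y) * th (phi z) - g x (phi z) * th (phi y)
           - g (phi x) (phi y) * th (h z) + g (phi x) (phi z) * th (h y))))
     else if i = 2 then
       (\<forall>x y z. F (phi x) (phi y) z = - F x y z) \<and> (\<forall>x. th x = 0)
     else if i = 3 then
       (\<forall>x y z. F (phi x) (phi y) z = F x y z) \<and> (\<forall>x y z. F x y z = - F y x z)
     else if i = 4 then
       (\<forall>x y z. F (phi x) (phi y) z = F x y z) \<and> (\<forall>x y z. F x y z + F y z x + F z x y = 0)
     else if i = 5 then
       (\<forall>x y z. F x y z = th xi / (2 * real n) *
          (eta y * g (phi x) (phi z) - eta z * g (phi x) (phi y)))
     else if i = 6 then
       (\<forall>x y z. F x y z = - (ths xi / (2 * real n)) *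
          (eta y * g x (phi z) - eta z * g x (phi y)))
     else if i = 7 then
       (\<forall>x y z. F x y z = - eta y * F x z xi + eta z * F x y xi) \<and>
       (\<forall>x y. F x y xi = - F y x xi \<and> F x y xi = - F (phi x) (phi y) xi) \<and> ths xi = 0
     else if i = 8 then
       (\<forall>x y z. F x y z = - eta y * F x z xi + eta z * F x y xi) \<and>
       (\<forall>x y. F x y xi = F y x xi \<and> F x y xi = - F (phi x) (phi y) xi) \<and> th xi = 0
     else if i = 9 then
       (\<forall>x y z. F x y z = - eta y * F x z xi + eta z * F x y xi) \<and>
       (\<forall>x y. F x y xi = - F y x xi \<and> F x y xi = F (phi x) (phi y) xi)
     else if i = 10 then
       (\<forall>x y z. F x y z = - eta y * F x z xi + eta z * F x y xi) \<and>
       (\<forall>x y. F x y xi = F y x xi \<and> F x y xi = F (phi x) (phi y) xi)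
     else if i = 11 then
       (\<forall>x y z. F x y z = eta x * F xi (phi y) (phi z))
     else if i = 12 then
       (\<forall>x y z. F x y z = eta x * (eta y * F xi xi z - eta z * F xi xi y))
     else False))"

definition in_class ::
  "nat \<Rightarrow> (real^('m::finite) \<Rightarrow> real^('m::finite) \<Rightarrow> real) \<Rightarrow> (real^('m::finite) \<Rightarrow> real^('m::finite)) \<Rightarrow> real^('m::finite) \<Rightarrow> (real^('m::finite) \<Rightarrow> real)
     \<Rightarrow> nat set \<Rightarrow> ('m::finite) tens3 \<Rightarrow> bool" where
  "in_class n g phi xi eta I F \<longleftrightarrow>
     (\<exists>C. (\<forall>i\<in>I. Gclass n g phi xi eta i (C i)) \<and> (\<forall>x y z. F x y z = (\<Sum>i\<in>I. C i x y z)))"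

text \<open>Christoffel term: Gamma p x y = nabla_x Y at p for the constant vector field Y = y,
 characterised by the Koszul formula for constant (hence commuting) vector fields.\<close>
definition christoffel ::
  "(real^('m::finite) \<Rightarrow> real^('m::finite) \<Rightarrow> real^('m::finite) \<Rightarrow> real) \<Rightarrow> real^('m::finite) \<Rightarrow> real^('m::finite) \<Rightarrow> real^('m::finite) \<Rightarrow> real^('m::finite)" where
  "christoffel g p x y = (THE w. \<forall>z. 2 * g p w z =
       dd (\<lambda>q. g q y z) p x + dd (\<lambda>q. g q x z) p y - dd (\<lambda>q. g q x y) p z)"

definition lc_nabla ::
  "(real^('m::finite) \<Rightarrow> real^('m::finite) \<Rightarrow> real^('m::finite) \<Rightarrow> real) \<Rightarrow> (real^('m::finite) \<Rightarrow> real^('m::finite)) \<Rightarrow> real^('m::finite) \<Rightarrow> real^('m::finite) \<Rightarrow> real^('m::finite)" where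
  "lc_nabla g Y p x = dd Y p x + christoffel g p x (Y p)"

definition nabla_phi ::
  "(real^('m::finite) \<Rightarrow> real^('m::finite) \<Rightarrow> real^('m::finite) \<Rightarrow> real) \<Rightarrow> (real^('m::finite) \<Rightarrow> real^('m::finite) \<Rightarrow> real^('m::finite))
     \<Rightarrow> real^('m::finite) \<Rightarrow> real^('m::finite) \<Rightarrow> real^('m::finite) \<Rightarrow> real^('m::finite)" where
  "nabla_phi g phi p x y = lc_nabla g (\<lambda>q. phi q y) p x - phi p (lc_nabla g (\<lambda>q. y) p x)"

definition struct_tensor ::
  "(real^('m::finite) \<Rightarrow> real^('m::finite) \<Rightarrow> real^('m::finite) \<Rightarrow> real) \<Rightarrow> (real^('m::finite) \<Rightarrow> real^('m::finite) \<Rightarrow> real^('m::finite)) \<Rightarrow> real^('m::finite) \<Rightarrow> ('m::finite) tens3" where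
  "struct_tensor g phi p x y z = g p (nabla_phi g phi p x y) z"

text \<open>(L_xi g)(X,Y) = xi(g(X,Y)) - g([xi,X],Y) - g(X,[xi,Y]) for constant X = x, Y = y
 (so [xi,X] = - D xi(x)).\<close>
definition lie_g ::
  "(real^('m::finite) \<Rightarrow> real^('m::finite) \<Rightarrow> real^('m::finite) \<Rightarrow> real) \<Rightarrow> (real^('m::finite) \<Rightarrow> real^('m::finite)) \<Rightarrow> real^('m::finite) \<Rightarrow> real^('m::finite) \<Rightarrow> real^('m::finite) \<Rightarrow> real" where
  "lie_g g xi p x y = dd (\<lambda>q. g q x y) p (xi p) + g p (dd xi p x) y + g p x (dd xi p y)"

definition killing_on ::
  "(real^('m::finite)) set \<Rightarrow> (real^('m::finite) \<Rightarrow> real^('m::finite) \<Rightarrow> real^('m::finite) \<Rightarrow> real) \<Rightarrow> (real^('m::finite) \<Rightarrow> real^('m::finite)) \<Rightarrow> bool" where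
  "killing_on U g xi \<longleftrightarrow> (\<forall>p\<in>U. \<forall>x y. lie_g g xi p x y = 0)"

end

theory Submission
  imports Defs
begin

lemma tri_lin:
  assumes "trilinear F"
  shows "F (x+y) z w = F x z w + F y z w" "F x (y+z) w = F x y w + F x z w" "F x y (z+w) = F x y z + F x y w"
   "F (c *\<^sub>R x) y z = c * F x y z" "F x (c *\<^sub>R y) z = c * F x y z" "F x y (c *\<^sub>R z) = c * F x y z"
   "F (x - y) z w = F x z w - F y z w" "F x (y-z) w = F x y w - F x z w" "F x y (z-w) = F x y z - F x y w"
   "F 0 y z = 0" "F x 0 z = 0" "F x y 0 = 0"
   "F (-x) y z = - F x y z" "F x (-y) z = - F x y z" "F x y (-z) = - F x y z"
  using assms unfolding trilinear_def
  by (simp_all add: linear_add[of "\<lambda>x. F x _ _"] linear_add[of "\<lambda>y. F _ y _"] linear_add[of "\<lambda>z. F _ _ z"]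
    linear_scale[of "\<lambda>x. F x _ _"] linear_scale[of "\<lambda>y. F _ y _"] linear_scale[of "\<lambda>z. F _ _ z"]
    linear_diff[of "\<lambda>x. F x _ _"] linear_diff[of "\<lambda>y. F _ y _"] linear_diff[of "\<lambda>z. F _ _ z"]
    linear_0[of "\<lambda>x. F x _ _"] linear_0[of "\<lambda>y. F _ y _"] linear_0[of "\<lambda>z. F _ _ z"]
    linear_neg[of "\<lambda>x. F x _ _"] linear_neg[of "\<lambda>y. F _ y _"] linear_neg[of "\<lambda>z. F _ _ z"])

lemma trilinearI:
  assumes "\<And>x1 x2 y z. F (x1+x2) y z = F x1 y z + F x2 y z"
    "\<And>c x y z. F (c *\<^sub>R x) y z = c * F x y z"
    "\<And>x y1 y2 z. F x (y1+y2) z = F x y1 z + F x y2 z"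
    "\<And>c x y z. F x (c *\<^sub>R y) z = c * F x y z"
    "\<And>x y z1 z2. F x y (z1+z2) = F x y z1 + F x y z2"
    "\<And>c x y z. F x y (c *\<^sub>R z) = c * F x y z"
  shows "trilinear F"
  unfolding trilinear_def by (auto intro!: linearI simp: assms)

locale apc =
  fixes n :: nat and g :: "real^'m::finite \<Rightarrow> real^'m \<Rightarrow> real" and phi :: "real^'m \<Rightarrow> real^'m"
    and xi :: "real^'m" and eta :: "real^'m \<Rightarrow> real"
  assumes apcm: "apcm_point g phi xi eta" and card: "CARD('m) = 2*n+1" and n1: "n \<ge> 1"
begin

lemma lin_g1: "linear (\<lambda>x. g x y)" and lin_g2: "linear (g x)" and g_sym: "g x y = g y x"
  and nondeg: "(\<forall>y. g x y = 0) \<Longrightarrow> x = 0" and lin_phi: "linear phi" and lin_eta: "linear eta"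
  and phi_phi[simp]: "phi (phi x) = x - eta x *\<^sub>R xi" and eta_xi[simp]: "eta xi = 1" and phi_xi[simp]: "phi xi = 0"
  and g_phi_phi[simp]: "g (phi x) (phi y) = - g x y + eta x * eta y"
  using apcm unfolding apcm_point_def bilinear_form_def by auto

lemma g_lin[simp]:
  "g (x+y) z = g x z + g y z" "g x (y+z) = g x y + g x z"
  "g (c *\<^sub>R x) y = c * g x y" "g x (c *\<^sub>R y) = c * g x y"
  "g (x - y) z = g x z - g y z" "g x (y-z) = g x y - g x z"
  "g 0 y = 0" "g x 0 = 0" "g (-x) y = - g x y" "g x (-y) = - g x y"
  using lin_g1 lin_g2
  by (simp_all add: linear_add[of "\<lambda>x. g x _"] linear_add[of "g _"] linear_scale[of "\<lambda>x. g x _"] linear_scale[of "g _"]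
     linear_diff[of "\<lambda>x. g x _"] linear_diff[of "g _"] linear_0[of "\<lambda>x. g x _"] linear_0[of "g _"]
     linear_neg[of "\<lambda>x. g x _"] linear_neg[of "g _"])

lemma phi_lin[simp]: "phi (x+y) = phi x + phi y" "phi (c *\<^sub>R x) = c *\<^sub>R phi x" "phi (x-y) = phi x - phi y"
  "phi 0 = 0" "phi (-x) = - phi x"
  using lin_phi by (simp_all add: linear_add linear_scale linear_diff linear_0 linear_neg)

lemma eta_lin[simp]: "eta (x+y) = eta x + eta y" "eta (c *\<^sub>R x) = c * eta x" "eta (x-y) = eta x - eta y"
  "eta 0 = 0" "eta (-x) = - eta x"
  using lin_eta by (simp_all add: linear_add linear_scale linear_diff linear_0 linear_neg)

lemma g_xi[simp]: "g x xi = eta x"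
proof -
  have "g (phi x) (phi xi) = - g x xi + eta x * eta xi" by (rule g_phi_phi)
  then show ?thesis by simp
qed

lemma g_xi'[simp]: "g xi x = eta x"
  using g_sym g_xi by metis

lemma eta_phi[simp]: "eta (phi x) = 0"
proof -
  have "phi (phi (phi x)) = phi x" by simp
  also have "phi (phi (phi x)) = phi x - eta (phi x) *\<^sub>R xi" by (rule phi_phi)
  finally have "eta (phi x) *\<^sub>R xi = 0" by simp
  moreover have "xi \<noteq> 0" using eta_xi by (metis eta_lin(4) zero_neq_one)
  ultimately show ?thesis by simp
qed

lemma g_phi_skew: "g (phi x) y = - g x (phi y)"
proof -
  have 1: "g (phi x) (phi (phi y)) = - g x (phi y) + eta x * eta (phi y)" by (rule g_phi_phi)
  have 2: "g (phi x) (phi (phi y)) = g (phi x) y" by simp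
  from 1 2 show ?thesis by simp
qed

lemma phi3[simp]: "phi (phi (phi x)) = phi x" by simp

lemma xi_ne0: "xi \<noteq> 0" using eta_xi by (metis eta_lin(4) zero_neq_one)

lemma decomp: "x = phi (phi x) + eta x *\<^sub>R xi" by simp


abbreviation "GC i F \<equiv> Gclass n g phi xi eta i F"
abbreviation "Kil F \<equiv> (\<forall>x y. F x (phi y) xi + F y (phi x) xi = 0)"

lemma theta_0: "trilinear F \<Longrightarrow> theta n g eta F 0 = 0"
  unfolding theta_def Let_def by (simp add: tri_lin)


lemma GC_iff:
  "GC 2 F \<longleftrightarrow> Fspace phi xi eta F \<and> (\<forall>x y z. F (phi x) (phi y) z = - F x y z) \<and> (\<forall>x. theta n g eta F x = 0)"
  "GC 3 F \<longleftrightarrow> Fspace phi xi eta F \<and> (\<forall>x y z. F (phi x) (phi y) z = F x y z) \<and> (\<forall>x y z. F x y z = - F y x z)"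
  "GC 4 F \<longleftrightarrow> Fspace phi xi eta F \<and> (\<forall>x y z. F (phi x) (phi y) z = F x y z) \<and> (\<forall>x y z. F x y z + F y z x + F z x y = 0)"
  "GC 5 F \<longleftrightarrow> Fspace phi xi eta F \<and> (\<forall>x y z. F x y z = theta n g eta F xi / (2 * real n) *
          (eta y * g (phi x) (phi z) - eta z * g (phi x) (phi y)))"
  "GC 8 F \<longleftrightarrow> Fspace phi xi eta F \<and> (\<forall>x y z. F x y z = - eta y * F x z xi + eta z * F x y xi) \<and>
       (\<forall>x y. F x y xi = F y x xi \<and> F x y xi = - F (phi x) (phi y) xi) \<and> theta n g eta F xi = 0"
  "GC 9 F \<longleftrightarrow> Fspace phi xi eta F \<and> (\<forall>x y z. F x y z = - eta y * F x z xi + eta z * F x y xi) \<and>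
       (\<forall>x y. F x y xi = - F y x xi \<and> F x y xi = F (phi x) (phi y) xi)"
  "GC 11 F \<longleftrightarrow> Fspace phi xi eta F \<and> (\<forall>x y z. F x y z = eta x * F xi (phi y) (phi z))"
  "n = 1 \<Longrightarrow> GC 1 F \<longleftrightarrow> Fspace phi xi eta F \<and> (\<forall>x y z. F x y z = 0)"
  "n \<noteq> 1 \<Longrightarrow> GC 1 F \<longleftrightarrow> Fspace phi xi eta F \<and> (\<forall>x y z. F x y z = 1 / (2 * (real n - 1)) *
          (g x (phi y) * theta n g eta F (phi z) - g x (phi z) * theta n g eta F (phi y)
           - g (phi x) (phi y) * theta n g eta F (phi (phi z)) + g (phi x) (phi z) * theta n g eta F (phi (phi y))))"
  unfolding Gclass_def Let_def by (simp_all del: phi_phi)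

lemma GC_K:
  assumes "i \<in> {1,2,3,4,5,8,9,11}" "GC i C"
  shows "C x (phi y) xi + C y (phi x) xi = 0"
proof -
  have Fs: "Fspace phi xi eta C" using assms(2) unfolding Gclass_def by blast
  have tri: "trilinear C" using Fs unfolding Fspace_def by blast
  have sk: "\<And>x y z. C x y z = - C x z y" using Fs unfolding Fspace_def by blast
  note tl = tri_lin[OF tri]
  consider "i = 1" | "i = 2" | "i = 3" | "i = 4" | "i = 5" | "i = 8" | "i = 9" | "i = 11" using assms(1) by auto
  then show ?thesis
  proof cases
    case 1
    show ?thesis
    proof (cases "n = 1")
      case True
      have c1: "GC 1 C" using assms(2) \<open>i=1\<close> by simp
      then have "\<forall>x y z. C x y z = 0" using GC_iff(8)[OF True] by blast
      then show ?thesis by simp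
    next
      case False
      then have r: "\<And>x y z. C x y z = 1 / (2 * (real n - 1)) *
          (g x (phi y) * theta n g eta C (phi z) - g x (phi z) * theta n g eta C (phi y)
           - g (phi x) (phi y) * theta n g eta C (phi (phi z)) + g (phi x) (phi z) * theta n g eta C (phi (phi y)))"
        using assms(2) \<open>i=1\<close> GC_iff(9)[OF False] by (simp only:)
      show ?thesis by (subst (1 2) r) (simp add: theta_0[OF tri])
    qed
  next
    case 2
    then have r: "\<And>x y z. C (phi x) (phi y) z = - C x y z" using assms(2) GC_iff by blast
    have z: "C a xi b = 0" for a b using r[of a xi b] by (simp add: tl)
    show ?thesis using sk[of x "phi y" xi] sk[of y "phi x" xi] by (simp add: z)
  next
    case 3
    then have r: "\<And>x y z. C (phi x) (phi y) z = C x y z" using assms(2) GC_iff by blast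
    have z: "C a xi b = 0" for a b using r[of a xi b] by (simp add: tl)
    show ?thesis using sk[of x "phi y" xi] sk[of y "phi x" xi] by (simp add: z)
  next
    case 4
    then have r: "\<And>x y z. C (phi x) (phi y) z = C x y z" using assms(2) GC_iff by blast
    have z: "C a xi b = 0" for a b using r[of a xi b] by (simp add: tl)
    show ?thesis using sk[of x "phi y" xi] sk[of y "phi x" xi] by (simp add: z)
  next
    case 5
    have ci: "GC 5 C" using assms(2) \<open>i=5\<close> by simp
    have r: "\<And>x y z. C x y z = theta n g eta C xi / (2 * real n) * (eta y * g (phi x) (phi z) - eta z * g (phi x) (phi y))"
      using ci GC_iff(4) by blast
    have a: "g (phi x) y = - g x (phi y)" by (rule g_phi_skew)
    have b: "g (phi y) x = g x (phi y)" using g_phi_skew[of y x] g_sym[of y "phi x"] g_sym[of x "phi y"] a by simp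
    show ?thesis by (simp add: r a b algebra_simps)
  next
    case 6
    have ci: "GC 8 C" using assms(2) \<open>i=8\<close> by simp
    have r1: "\<And>x y. C x y xi = C y x xi" and r2: "\<And>x y. C x y xi = - C (phi x) (phi y) xi"
      using ci GC_iff(5) by blast+
    have z: "C xi (phi a) xi = 0" for a using r2[of xi "phi a"] by (simp add: tl)
    have "C y (phi x) xi = C (phi x) y xi" by (rule r1)
    also have "\<dots> = - C (phi (phi x)) (phi y) xi" by (rule r2)
    also have "\<dots> = - C x (phi y) xi" by (simp add: tl z)
    finally show ?thesis by simp
  next
    case 7
    have ci: "GC 9 C" using assms(2) \<open>i=9\<close> by simp
    have r1: "\<And>x y. C x y xi = - C y x xi" and r2: "\<And>x y. C x y xi = C (phi x) (phi y) xi"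
      using ci GC_iff(6) by blast+
    have z: "C xi (phi a) xi = 0" for a using r2[of xi "phi a"] by (simp add: tl)
    have "C y (phi x) xi = - C (phi x) y xi" by (rule r1)
    also have "\<dots> = - C (phi (phi x)) (phi y) xi" by (simp add: r2[of "phi x"])
    also have "\<dots> = - C x (phi y) xi" by (simp add: tl z)
    finally show ?thesis by simp
  next
    case 8
    have ci: "GC 11 C" using assms(2) \<open>i=11\<close> by simp
    have r: "\<And>x y z. C x y z = eta x * C xi (phi y) (phi z)"
      using ci GC_iff(7) by blast
    show ?thesis by (subst (1 2) r) (simp add: tl)
  qed
qed

lemma in_class_K:
  assumes "in_class n g phi xi eta {1,2,3,4,5,8,9,11} F"
  shows "Kil F"
proof (intro allI)
  fix x y
  from assms obtain C where C: "\<forall>i\<in>{1,2,3,4,5,8,9,11}. GC i (C i)"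
    and s: "\<forall>x y z. F x y z = (\<Sum>i\<in>{1,2,3,4,5,8,9,11}. C i x y z)"
    unfolding in_class_def by blast
  have "F x (phi y) xi + F y (phi x) xi = (\<Sum>i\<in>{1,2,3,4,5,8,9,11::nat}. C i x (phi y) xi + C i y (phi x) xi)"
    by (simp add: s sum.distrib)
  also have "\<dots> = 0" by (rule sum.neutral) (use C GC_K in blast)
  finally show "F x (phi y) xi + F y (phi x) xi = 0" .
qed


lemma g_sum1: "g (sum f A) z = (\<Sum>a\<in>A. g (f a) z)"
  using linear_sum[OF lin_g1] by blast
lemma g_sum2: "g z (sum f A) = (\<Sum>a\<in>A. g z (f a))"
  using linear_sum[OF lin_g2] by blast
lemma eta_sum: "eta (sum f A) = (\<Sum>a\<in>A. eta (f a))"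
  using linear_sum[OF lin_eta] by blast
lemma phi_sum: "phi (sum f A) = (\<Sum>a\<in>A. phi (f a))"
  using linear_sum[OF lin_phi] by blast

lemma subD: "subspace {v. eta v = 0}"
  using lin_eta by (simp add: linear_subspace_kernel)

lemma dimUNIV: "dim (UNIV :: (real^'m) set) = 2*n+1"
  using card by simp

lemma basisD: obtains B where "B \<subseteq> {v. eta v = 0}" "independent B" "{v. eta v = 0} \<subseteq> span B" "card B = 2*n"
proof -
  obtain B where B: "B \<subseteq> {v. eta v = 0}" "independent B" "{v. eta v = 0} \<subseteq> span B" "card B = dim {v. eta v = 0}"
    using basis_exists by blast
  have spB: "span B \<subseteq> {v. eta v = 0}" using span_minimal[OF B(1) subD] .
  have xin: "xi \<notin> span B" using spB by auto
  have ind: "independent (insert xi B)" using independent_insertI[OF xin B(2)] .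
  have sp: "UNIV \<subseteq> span (insert xi B)"
  proof
    fix v :: "real^'m"
    have "v - eta v *\<^sub>R xi \<in> span B" using B(3) by auto
    then have "v - eta v *\<^sub>R xi \<in> span (insert xi B)" by (meson span_mono subset_insertI subsetD)
    moreover have "eta v *\<^sub>R xi \<in> span (insert xi B)" by (simp add: span_base span_scale)
    ultimately have "(v - eta v *\<^sub>R xi) + eta v *\<^sub>R xi \<in> span (insert xi B)" by (rule span_add)
    then show "v \<in> span (insert xi B)" by simp
  qed
  have "card (insert xi B) = dim (UNIV :: (real^'m) set)"
    using basis_card_eq_dim[OF subset_UNIV sp ind] .
  moreover have "finite B" using B(2) finiteI_independent by blast
  moreover have "xi \<notin> B" using B(1) by auto
  ultimately have "card B = 2*n" using dimUNIV by simp
  then show ?thesis using B that by blast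
qed

lemma exD: "\<exists>e. Dbasis n eta e"
proof -
  obtain B where B: "B \<subseteq> {v. eta v = 0}" "independent B" "{v. eta v = 0} \<subseteq> span B" "card B = 2*n"
    using basisD by blast
  have "finite B" using B(2) finiteI_independent by blast
  then obtain h where h: "bij_betw h {0..<card B} B" using ex_bij_betw_nat_finite by blast
  then have "h ` {..<2*n} = B" "inj_on h {..<2*n}" using B(4) by (auto simp: bij_betw_def atLeast0LessThan)
  then show ?thesis unfolding Dbasis_def using B by (intro exI[of _ h]) auto
qed

lemma dimD: "dim {v. eta v = 0} = 2*n"
proof -
  obtain B where B: "B \<subseteq> {v. eta v = 0}" "independent B" "{v. eta v = 0} \<subseteq> span B" "card B = 2*n"
    using basisD by blast
  show ?thesis using basis_card_eq_dim[OF B(1) B(3) B(2)] B(4) by simp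
qed

lemma coeff0:
  assumes "Dbasis n eta e" "(\<Sum>k<2*n. c k *\<^sub>R e k) = 0" "k < 2*n"
  shows "c k = 0"
proof -
  have inj: "inj_on e {..<2*n}" and ind: "independent (e ` {..<2*n})" using assms(1) unfolding Dbasis_def by auto
  define u where "u v = c (inv_into {..<2*n} e v)" for v
  have "(\<Sum>v\<in>e ` {..<2*n}. u v *\<^sub>R v) = (\<Sum>k<2*n. u (e k) *\<^sub>R e k)"
    by (rule sum.reindex[OF inj, unfolded comp_def])
  also have "\<dots> = (\<Sum>k<2*n. c k *\<^sub>R e k)"
    by (rule sum.cong) (auto simp: u_def inv_into_f_f[OF inj])
  finally have "(\<Sum>v\<in>e ` {..<2*n}. u v *\<^sub>R v) = 0" using assms(2) by simp
  then have "\<forall>v\<in>e ` {..<2*n}. u v = 0" using ind dependent_finite[of "e ` {..<2*n}"] by auto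
  then show ?thesis using assms(3) by (auto simp: u_def inv_into_f_f[OF inj])
qed

lemma spanD:
  assumes "Dbasis n eta e" "eta v = 0"
  shows "\<exists>c. v = (\<Sum>k<2*n. c k *\<^sub>R e k)"
proof -
  have inj: "inj_on e {..<2*n}" and ind: "independent (e ` {..<2*n})" and ed: "\<forall>i<2*n. eta (e i) = 0"
    using assms(1) unfolding Dbasis_def by auto
  have "{v. eta v = 0} \<subseteq> span (e ` {..<2*n})"
    by (rule card_ge_dim_independent) (use ed ind inj in \<open>auto simp: dimD card_image\<close>)
  then have "v \<in> span (e ` {..<2*n})" using assms(2) by auto
  then obtain u where "v = (\<Sum>w\<in>e ` {..<2*n}. u w *\<^sub>R w)" using span_finite[of "e ` {..<2*n}"] by auto
  also have "\<dots> = (\<Sum>k<2*n. u (e k) *\<^sub>R e k)" by (rule sum.reindex[OF inj, unfolded comp_def])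
  finally show ?thesis by (intro exI[of _ "\<lambda>k. u (e k)"])
qed


lemma Dbasis_D: "Dbasis n eta e \<Longrightarrow> i < 2*n \<Longrightarrow> eta (e i) = 0"
  unfolding Dbasis_def by auto

lemma ginv_ex:
  assumes Db: "Dbasis n eta e"
  shows "\<exists>gi. \<forall>i<2*n. \<forall>j<2*n. (\<Sum>k<2*n. gi i k * g (e k) (e j)) = (if i = j then 1 else 0)"
proof -
  define Psi where "Psi v = (\<Sum>j<2*n. g v (e j) *\<^sub>R e j) + g v xi *\<^sub>R xi" for v
  have lin: "linear Psi"
    by (rule linearI) (simp_all add: Psi_def scaleR_add_left sum.distrib scaleR_right.sum algebra_simps)
  have etaPsi: "eta (Psi v) = g v xi" for v
    using Db by (simp add: Psi_def eta_sum Dbasis_D)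
  have inj: "inj Psi"
  proof (rule linear_inj_iff_eq_0[OF lin, THEN iffD2], intro allI impI)
    fix v assume P0: "Psi v = 0"
    then have gx: "g v xi = 0" using etaPsi[of v] by simp
    then have "(\<Sum>j<2*n. g v (e j) *\<^sub>R e j) = 0" using P0 by (simp add: Psi_def)
    then have ge: "\<And>j. j < 2*n \<Longrightarrow> g v (e j) = 0" using coeff0[OF Db, of "\<lambda>j. g v (e j)"] by blast
    have "g v z = 0" for z
    proof -
      have "eta (z - eta z *\<^sub>R xi) = 0" by simp
      then obtain c where c: "z - eta z *\<^sub>R xi = (\<Sum>k<2*n. c k *\<^sub>R e k)" using spanD[OF Db] by blast
      have zz: "z = (\<Sum>k<2*n. c k *\<^sub>R e k) + eta z *\<^sub>R xi" using c by (simp add: algebra_simps)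
      have "g v z = g v ((\<Sum>k<2*n. c k *\<^sub>R e k) + eta z *\<^sub>R xi)" by (rule arg_cong[OF zz])
      also have "\<dots> = (\<Sum>k<2*n. c k * g v (e k)) + eta z * g v xi" by (simp add: g_sum2)
      finally have "g v z = (\<Sum>k<2*n. c k * g v (e k)) + eta z * g v xi" .
      then show ?thesis using ge gx by simp
    qed
    then show "v = 0" using nondeg by blast
  qed
  have surj: "surj Psi" by (metis linear_injective_imp_surjective lin inj)
  have "\<forall>i. \<exists>c. i < 2*n \<longrightarrow> (\<forall>j<2*n. (\<Sum>k<2*n. c k * g (e k) (e j)) = (if i = j then 1 else 0))"
  proof (intro allI)
    fix i
    show "\<exists>c. i < 2*n \<longrightarrow> (\<forall>j<2*n. (\<Sum>k<2*n. c k * g (e k) (e j)) = (if i = j then 1 else 0))"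
    proof (cases "i < 2*n")
      case False then show ?thesis by simp
    next
      case True
      obtain w where w: "Psi w = e i" using surj by (metis surjD)
      have gx: "g w xi = 0" using etaPsi[of w] w Dbasis_D[OF Db True] by simp
      have "(\<Sum>j<2*n. (if j = i then 1 else 0) *\<^sub>R e j) = (\<Sum>j<2*n. if j = i then e j else 0)"
        by (rule sum.cong) auto
      then have ei: "e i = (\<Sum>j<2*n. (if j = i then 1 else 0) *\<^sub>R e j)"
        using True by simp
      have "(\<Sum>j<2*n. (g w (e j) - (if j = i then 1 else 0)) *\<^sub>R e j) =
            (\<Sum>j<2*n. g w (e j) *\<^sub>R e j) - (\<Sum>j<2*n. (if j = i then 1 else 0) *\<^sub>R e j)"
        by (simp add: scaleR_diff_left sum_subtractf)
      also have "\<dots> = 0" using w gx ei by (simp add: Psi_def)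
      finally have gw: "\<And>j. j < 2*n \<Longrightarrow> g w (e j) = (if j = i then 1 else 0)"
        using coeff0[OF Db, of "\<lambda>j. g w (e j) - (if j = i then 1 else 0)"] by fastforce
      have "eta w = 0" using gx by simp
      then obtain c where c: "w = (\<Sum>k<2*n. c k *\<^sub>R e k)" using spanD[OF Db] by blast
      have "\<forall>j<2*n. (\<Sum>k<2*n. c k * g (e k) (e j)) = (if i = j then 1 else 0)"
      proof (intro allI impI)
        fix j assume "j < 2*n"
        have "(\<Sum>k<2*n. c k * g (e k) (e j)) = g w (e j)" by (simp add: c g_sum1)
        then show "(\<Sum>k<2*n. c k * g (e k) (e j)) = (if i = j then 1 else 0)" using gw[OF \<open>j<2*n\<close>] by auto
      qed
      then show ?thesis by blast
    qed
  qed
  then obtain gi where "\<forall>i. i < 2*n \<longrightarrow> (\<forall>j<2*n. (\<Sum>k<2*n. gi i k * g (e k) (e j)) = (if i = j then 1 else 0))"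
    by metis
  then show ?thesis by blast
qed

definition "EE = (SOME e. Dbasis n eta e)"
definition "GI = ginv n g EE"
definition "NN = 2*n"

lemma DbE: "Dbasis n eta EE"
  unfolding EE_def using exD by (rule someI_ex)

lemma E_D[simp]: "i < 2*n \<Longrightarrow> eta (EE i) = 0"
  using DbE Dbasis_D by blast

lemma GI_spec: "i < 2*n \<Longrightarrow> j < 2*n \<Longrightarrow> (\<Sum>k<2*n. GI i k * g (EE k) (EE j)) = (if i = j then 1 else 0)"
proof -
  have "\<forall>i<2*n. \<forall>j<2*n. (\<Sum>k<2*n. GI i k * g (EE k) (EE j)) = (if i = j then 1 else 0)"
    unfolding GI_def ginv_def using ginv_ex[OF DbE] by (rule someI_ex)
  then show "i < 2*n \<Longrightarrow> j < 2*n \<Longrightarrow> ?thesis" by blast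
qed

lemma theta_eq: "theta n g eta F z = (\<Sum>i<2*n. \<Sum>j<2*n. GI i j * F (EE i) (EE j) z)"
  unfolding theta_def GI_def EE_def Let_def ..

definition "WW i = (\<Sum>k<2*n. GI i k *\<^sub>R EE k)"

lemma W_D: "eta (WW i) = 0" by (simp add: WW_def eta_sum)

lemma gWE: "i < 2*n \<Longrightarrow> j < 2*n \<Longrightarrow> g (WW i) (EE j) = (if i = j then 1 else 0)"
  using GI_spec by (simp add: WW_def g_sum1)

lemma expand1: assumes "eta v = 0" shows "v = (\<Sum>j<2*n. g (WW j) v *\<^sub>R EE j)"
proof -
  obtain c where c: "v = (\<Sum>k<2*n. c k *\<^sub>R EE k)" using spanD[OF DbE assms] by blast
  have "g (WW j) v = c j" if "j < 2*n" for j
  proof -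
    have "g (WW j) v = (\<Sum>k<2*n. c k * (if j = k then 1 else 0))" using that by (simp add: c g_sum2 gWE)
    also have "\<dots> = c j" using that by (simp add: if_distrib cong: if_cong)
    finally show ?thesis .
  qed
  then show ?thesis using c by simp
qed

lemma GI_sym: assumes "i < 2*n" "k < 2*n" shows "GI i k = GI k i"
proof -
  have "\<And>i k. i < 2*n \<Longrightarrow> k < 2*n \<Longrightarrow> GI i k = g (WW k) (WW i)"
  proof -
    fix i k assume ik: "i < 2*n" "k < 2*n"
    have "WW i = (\<Sum>j<2*n. g (WW j) (WW i) *\<^sub>R EE j)" using expand1[OF W_D] .
    then have "(\<Sum>j<2*n. (GI i j - g (WW j) (WW i)) *\<^sub>R EE j) = 0"
      by (simp add: WW_def scaleR_diff_left sum_subtractf)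
    then show "GI i k = g (WW k) (WW i)" using coeff0[OF DbE, of "\<lambda>j. GI i j - g (WW j) (WW i)", OF _ ik(2)] by simp
  qed
  then show ?thesis using assms g_sym by metis
qed

lemma gW_GI: "j < 2*n \<Longrightarrow> g (WW j) v = (\<Sum>i<2*n. GI i j * g (EE i) v)"
  by (simp add: WW_def g_sum1 GI_sym)

lemma expand2: assumes "eta v = 0" shows "(\<Sum>j<2*n. (\<Sum>i<2*n. GI i j * g (EE i) v) *\<^sub>R EE j) = v"
proof -
  have "(\<Sum>j<2*n. (\<Sum>i<2*n. GI i j * g (EE i) v) *\<^sub>R EE j) = (\<Sum>j<2*n. g (WW j) v *\<^sub>R EE j)"
    by (rule sum.cong) (simp_all add: gW_GI)
  also have "\<dots> = v" using expand1[OF assms] by simp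
  finally show ?thesis .
qed

lemma trace_g: "(\<Sum>i<2*n. \<Sum>j<2*n. GI i j * g (EE i) (EE j)) = 2 * real n"
proof -
  have "(\<Sum>i<2*n. \<Sum>j<2*n. GI i j * g (EE i) (EE j)) = (\<Sum>i<2*n. (1::real))"
  proof (rule sum.cong[OF refl])
    fix i assume "i \<in> {..<2*n}"
    then show "(\<Sum>j<2*n. GI i j * g (EE i) (EE j)) = 1"
      using GI_spec[of i i] by (simp add: g_sym[of "EE i"])
  qed
  then show ?thesis by simp
qed

lemma trace_phi: "(\<Sum>i<2*n. \<Sum>j<2*n. GI i j * g (EE i) (phi (EE j))) = 0"
proof -
  let ?S = "(\<Sum>i<2*n. \<Sum>j<2*n. GI i j * g (EE i) (phi (EE j)))"
  have "?S = (\<Sum>i<2*n. \<Sum>j<2*n. - (GI j i * g (EE j) (phi (EE i))))"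
  proof (intro sum.cong refl)
    fix i j assume "i \<in> {..<2*n}" "j \<in> {..<2*n}"
    then show "GI i j * g (EE i) (phi (EE j)) = - (GI j i * g (EE j) (phi (EE i)))"
      using GI_sym[of i j] g_phi_skew[of "EE j" "EE i"] g_sym[of "EE i" "phi (EE j)"] by simp
  qed
  also have "\<dots> = - (\<Sum>i<2*n. \<Sum>j<2*n. GI j i * g (EE j) (phi (EE i)))" by (simp add: sum_negf)
  also have "(\<Sum>i<2*n. \<Sum>j<2*n. GI j i * g (EE j) (phi (EE i))) = ?S" by (rule sum.swap)
  finally show ?thesis by simp
qed

end


context apc begin

definition hor :: "('m tens3) \<Rightarrow> bool" where
  "hor T \<longleftrightarrow> trilinear T \<and> (\<forall>y z. T xi y z = 0) \<and> (\<forall>x z. T x xi z = 0) \<and> (\<forall>x y. T x y xi = 0)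
     \<and> (\<forall>x y z. T x y z = - T x z y) \<and> (\<forall>x y z. T x (phi y) (phi z) = T x y z)"

lemma horD:
  assumes "hor T"
  shows "trilinear T" "T xi y z = 0" "T x xi z = 0" "T x y xi = 0" "T x y z = - T x z y"
    "T x (phi y) (phi z) = T x y z"
  using assms unfolding hor_def by blast+

lemma hor_Fspace: assumes "hor T" shows "Fspace phi xi eta T"
  unfolding Fspace_def
proof (intro conjI allI)
  show "trilinear T" by (rule horD(1)[OF assms])
  fix x y z
  show "T x y z = - T x z y" by (rule horD(5)[OF assms])
  show "T x y z = T x (phi y) (phi z) - eta y * T x z xi + eta z * T x y xi"
    using horD(4,6)[OF assms] by simp
qed

lemma tri_comb: assumes "trilinear A" "trilinear B"
  shows "trilinear (\<lambda>x y z. a * A x y z + b * B x y z)"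
  by (rule trilinearI) (simp_all add: tri_lin[OF assms(1)] tri_lin[OF assms(2)] algebra_simps)

lemma Fspace_comb: assumes "Fspace phi xi eta A" "Fspace phi xi eta B"
  shows "Fspace phi xi eta (\<lambda>x y z. a * A x y z + b * B x y z)"
proof -
  have tA: "trilinear A" and sA: "\<And>x y z. A x y z = - A x z y"
    and fA: "\<And>x y z. A x y z = A x (phi y) (phi z) - eta y * A x z xi + eta z * A x y xi"
    using assms(1) unfolding Fspace_def by blast+
  have tB: "trilinear B" and sB: "\<And>x y z. B x y z = - B x z y"
    and fB: "\<And>x y z. B x y z = B x (phi y) (phi z) - eta y * B x z xi + eta z * B x y xi"
    using assms(2) unfolding Fspace_def by blast+
  show ?thesis unfolding Fspace_def
  proof (intro conjI allI)
    show "trilinear (\<lambda>x y z. a * A x y z + b * B x y z)" by (rule tri_comb[OF tA tB])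
  next
    fix x y z
    show "a * A x y z + b * B x y z = - (a * A x z y + b * B x z y)"
      using sA[of x y z] sB[of x y z] by simp
    show "a * A x y z + b * B x y z = a * A x (phi y) (phi z) + b * B x (phi y) (phi z) -
         eta y * (a * A x z xi + b * B x z xi) + eta z * (a * A x y xi + b * B x y xi)"
    proof -
      have eA: "A x y z = A x (phi y) (phi z) - eta y * A x z xi + eta z * A x y xi" by (rule fA)
      have eB: "B x y z = B x (phi y) (phi z) - eta y * B x z xi + eta z * B x y xi" by (rule fB)
      show ?thesis by (simp only: eA eB) (simp add: algebra_simps)
    qed
  qed
qed

lemma hor_comb: assumes "hor A" "hor B" shows "hor (\<lambda>x y z. a * A x y z + b * B x y z)"
  unfolding hor_def
proof (intro conjI allI)
  show "trilinear (\<lambda>x y z. a * A x y z + b * B x y z)" by (rule tri_comb[OF horD(1)[OF assms(1)] horD(1)[OF assms(2)]])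
next
  fix x y z
  show "a * A xi y z + b * B xi y z = 0" "a * A x xi z + b * B x xi z = 0" "a * A x y xi + b * B x y xi = 0"
    using horD(2-4)[OF assms(1)] horD(2-4)[OF assms(2)] by simp_all
  show "a * A x y z + b * B x y z = - (a * A x z y + b * B x z y)"
    using horD(5)[OF assms(1), of x y z] horD(5)[OF assms(2), of x y z] by simp
  show "a * A x (phi y) (phi z) + b * B x (phi y) (phi z) = a * A x y z + b * B x y z"
    using horD(6)[OF assms(1), of x y z] horD(6)[OF assms(2), of x y z] by simp
qed

lemma theta_comb: assumes "trilinear A" "trilinear B"
  shows "theta n g eta (\<lambda>x y z. a * A x y z + b * B x y z) w = a * theta n g eta A w + b * theta n g eta B w"
  by (simp add: theta_eq sum_distrib_left sum.distrib algebra_simps)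

lemma theta_lin: assumes "trilinear A"
  shows "theta n g eta A (x + y) = theta n g eta A x + theta n g eta A y"
    "theta n g eta A (c *\<^sub>R x) = c * theta n g eta A x"
    "theta n g eta A (x - y) = theta n g eta A x - theta n g eta A y"
    "theta n g eta A 0 = 0"
  by (simp_all add: theta_eq tri_lin[OF assms] sum_distrib_left sum.distrib sum_subtractf algebra_simps)

lemma theta_linear: assumes "trilinear A" shows "linear (theta n g eta A)"
  by (rule linearI) (simp_all add: theta_lin[OF assms])

lemma hor_swap13:
  assumes "hor T" "\<And>x y z. T (phi x) (phi y) z = T x y z"
  shows "T (phi x) y (phi z) = T x y z"
proof -
  have "T (phi x) y (phi z) = T (phi (phi x)) (phi y) (phi z)" using assms(2)[of "phi x" y "phi z"] by simp
  also have "\<dots> = T x y z" using horD(2,6)[OF assms(1)] by (simp add: tri_lin[OF horD(1)[OF assms(1)]])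
  finally show ?thesis .
qed

lemma G34:
  assumes hT: "hor T" and inv: "\<And>x y z. T (phi x) (phi y) z = T x y z"
  defines "C3 \<equiv> \<lambda>x y z. (1/3) * (T x y z + T y z x + T z x y)"
  shows "GC 3 C3" "GC 4 (\<lambda>x y z. 1 * T x y z + (-1) * C3 x y z)"
proof -
  note tT = horD(1)[OF hT]
  note tl = tri_lin[OF tT]
  have s13: "T (phi x) y (phi z) = T x y z" for x y z
  proof -
    have "T (phi x) y (phi z) = T (phi (phi x)) (phi y) (phi z)" using inv[of "phi x" y "phi z"] by (simp add: field_simps)
    also have "\<dots> = T x y z" using horD(2,6)[OF hT] by (simp add: tl)
    finally show ?thesis .
  qed
  have sk: "\<And>x y z. T x y z = - T x z y" by (rule horD(5)[OF hT])
  have p23: "\<And>x y z. T x (phi y) (phi z) = T x y z" by (rule horD(6)[OF hT])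
  have tC: "trilinear C3" by (rule trilinearI) (simp_all add: C3_def tl algebra_simps add_divide_distrib)
  have hC: "hor C3" unfolding hor_def
  proof (intro conjI allI)
    show "trilinear C3" by (rule tC)
  next
    fix x y z
    show "C3 xi y z = 0" "C3 x xi z = 0" "C3 x y xi = 0" using horD(2-4)[OF hT] by (simp_all add: C3_def)
    show "C3 x y z = - C3 x z y" unfolding C3_def using sk[of x y z] sk[of y z x] sk[of z x y] by (simp add: field_simps)
    show "C3 x (phi y) (phi z) = C3 x y z" unfolding C3_def using p23[of x y z] inv[of y z x] s13[of z x y] by (simp add: field_simps)
  qed
  show "GC 3 C3" unfolding GC_iff
  proof (intro conjI allI)
    show "Fspace phi xi eta C3" by (rule hor_Fspace[OF hC])
  next
    fix x y z
    show "C3 (phi x) (phi y) z = C3 x y z" unfolding C3_def using inv[of x y z] s13[of y z x] p23[of z x y] by (simp add: field_simps)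
    show "C3 x y z = - C3 y x z" unfolding C3_def using sk[of x y z] sk[of y z x] sk[of z x y] by (simp add: field_simps)
  qed
  show "GC 4 (\<lambda>x y z. 1 * T x y z + (-1) * C3 x y z)" unfolding GC_iff
  proof (intro conjI allI)
    show "Fspace phi xi eta (\<lambda>x y z. 1 * T x y z + (-1) * C3 x y z)" by (rule hor_Fspace[OF hor_comb[OF hT hC]])
  next
    fix x y z
    show "1 * T (phi x) (phi y) z + (-1) * C3 (phi x) (phi y) z = 1 * T x y z + (-1) * C3 x y z"
      unfolding C3_def using inv[of x y z] s13[of y z x] p23[of z x y] by (simp add: field_simps)
    show "1 * T x y z + - 1 * C3 x y z + (1 * T y z x + - 1 * C3 y z x) + (1 * T z x y + - 1 * C3 z x y) = 0"
      unfolding C3_def by (simp add: field_simps)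
  qed
qed

end


context apc begin

lemma lin_rules: assumes "linear l"
  shows "l (a + b) = l a + l b" "l (c *\<^sub>R a) = c * l a" "l (a - b) = l a - l b" "l 0 = 0" "l (- a) = - l a"
  using assms by (simp_all add: linear_add linear_scale linear_diff linear_0 linear_neg)

lemma sumlin: assumes "linear l" "eta v = 0"
  shows "(\<Sum>j<2*n. (\<Sum>i<2*n. GI i j * g (EE i) v) * l (EE j)) = l v"
proof -
  have "l v = l (\<Sum>j<2*n. (\<Sum>i<2*n. GI i j * g (EE i) v) *\<^sub>R EE j)" using expand2[OF assms(2)] by simp
  also have "\<dots> = (\<Sum>j<2*n. (\<Sum>i<2*n. GI i j * g (EE i) v) * l (EE j))"
    by (simp add: linear_sum[OF assms(1)] lin_rules[OF assms(1)])
  finally show ?thesis by simp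
qed

definition C1t :: "(real^'m \<Rightarrow> real) \<Rightarrow> 'm tens3" where
  "C1t th x y z = 1 / (2 * (real n - 1)) *
          (g x (phi y) * th (phi z) - g x (phi z) * th (phi y)
           - g (phi x) (phi y) * th (phi (phi z)) + g (phi x) (phi z) * th (phi (phi y)))"

lemma theta_C1t:
  assumes lt: "linear th" and n2: "n \<noteq> 1"
  shows "theta n g eta (C1t th) w = th (phi (phi w))"
proof -
  let ?k = "1 / (2 * (real n - 1))"
  have S1: "(\<Sum>i<2*n. \<Sum>j<2*n. GI i j * g (EE i) (phi (EE j)) * th (phi w)) = 0"
    using trace_phi by (simp add: sum_distrib_right[symmetric])
  have S2: "(\<Sum>i<2*n. \<Sum>j<2*n. GI i j * g (EE i) (phi w) * th (phi (EE j))) = th (phi (phi w))"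
  proof -
    have "(\<Sum>i<2*n. \<Sum>j<2*n. GI i j * g (EE i) (phi w) * th (phi (EE j)))
        = (\<Sum>j<2*n. (\<Sum>i<2*n. GI i j * g (EE i) (phi w)) * (th \<circ> phi) (EE j))"
      by (subst sum.swap) (simp add: sum_distrib_right)
    also have "\<dots> = (th \<circ> phi) (phi w)"
      by (rule sumlin[OF linear_compose[OF lin_phi lt]]) simp
    finally show ?thesis by (simp del: phi_phi)
  qed
  have S3: "(\<Sum>i<2*n. \<Sum>j<2*n. GI i j * g (phi (EE i)) (phi (EE j)) * th (phi (phi w))) = - (2 * real n) * th (phi (phi w))"
  proof -
    have "(\<Sum>i<2*n. \<Sum>j<2*n. GI i j * g (phi (EE i)) (phi (EE j)) * th (phi (phi w)))
      = - ((\<Sum>i<2*n. \<Sum>j<2*n. GI i j * g (EE i) (EE j)) * th (phi (phi w)))"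
      by (simp add: sum_distrib_right sum_negf del: phi_phi)
    then show ?thesis using trace_g by simp
  qed
  have S4: "(\<Sum>i<2*n. \<Sum>j<2*n. GI i j * g (phi (EE i)) (phi w) * th (phi (phi (EE j)))) = - th (phi (phi w))"
  proof -
    have "(\<Sum>i<2*n. \<Sum>j<2*n. GI i j * g (phi (EE i)) (phi w) * th (phi (phi (EE j))))
        = - (\<Sum>j<2*n. (\<Sum>i<2*n. GI i j * g (EE i) (phi (phi w))) * th (EE j))"
      by (subst sum.swap) (simp add: sum_distrib_right sum_negf)
    also have "(\<Sum>j<2*n. (\<Sum>i<2*n. GI i j * g (EE i) (phi (phi w))) * th (EE j)) = th (phi (phi w))"
      by (rule sumlin[OF lt]) (simp del: phi_phi)
    finally show ?thesis .
  qed
  have "theta n g eta (C1t th) w = ?k * (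
       (\<Sum>i<2*n. \<Sum>j<2*n. GI i j * g (EE i) (phi (EE j)) * th (phi w))
     - (\<Sum>i<2*n. \<Sum>j<2*n. GI i j * g (EE i) (phi w) * th (phi (EE j)))
     - (\<Sum>i<2*n. \<Sum>j<2*n. GI i j * g (phi (EE i)) (phi (EE j)) * th (phi (phi w)))
     + (\<Sum>i<2*n. \<Sum>j<2*n. GI i j * g (phi (EE i)) (phi w) * th (phi (phi (EE j)))))"
    unfolding theta_eq C1t_def
    by (simp add: sum_distrib_left sum_subtractf sum.distrib algebra_simps del: phi_phi g_phi_phi)
  also have "\<dots> = ?k * ((2 * real n - 2) * th (phi (phi w)))"
    by (simp only: S1 S2 S3 S4) (simp add: algebra_simps)
  also have "\<dots> = th (phi (phi w))" using n2 n1 by (simp add: field_simps)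
  finally show ?thesis .
qed


lemma sum2: "(\<Sum>j<2. f j) = f (0::nat) + f 1"
  by (simp add: numeral_2_eq_2)

lemma hor_n1:
  assumes n1': "n = 1" and hT: "hor T"
  shows "T x y z = 0"
proof -
  note tl = tri_lin[OF horD(1)[OF hT]]
  have sk: "\<And>x y z. T x y z = - T x z y" by (rule horD(5)[OF hT])
  have p23: "\<And>x y z. T x (phi y) (phi z) = T x y z" by (rule horD(6)[OF hT])
  have diag: "T x a a = 0" for a using sk[of x a a] by simp
  define p where "p = g (WW 0) (phi (EE 0))"
  define q where "q = g (WW 1) (phi (EE 0))"
  define r where "r = g (WW 0) (phi (EE 1))"
  define s where "s = g (WW 1) (phi (EE 1))"
  have N: "2*n = 2" using n1' by simp
  have ph0: "phi (EE 0) = p *\<^sub>R EE 0 + q *\<^sub>R EE 1"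
    using expand1[of "phi (EE 0)"] by (simp add: N sum2 p_def q_def del: phi_phi)
  have ph1: "phi (EE 1) = r *\<^sub>R EE 0 + s *\<^sub>R EE 1"
    using expand1[of "phi (EE 1)"] by (simp add: N sum2 r_def s_def del: phi_phi)
  have ps: "p + s = 0"
  proof -
    have "(\<Sum>j<2*n. g (WW j) (phi (EE j))) = (\<Sum>j<2*n. \<Sum>i<2*n. GI i j * g (EE i) (phi (EE j)))"
      by (rule sum.cong) (simp_all add: gW_GI)
    also have "\<dots> = 0" using trace_phi by (subst sum.swap) simp
    finally show ?thesis by (simp add: N sum2 p_def s_def)
  qed
  have pq: "p * p + q * r = 1"
  proof -
    have l: "0 < 2*n" "1 < 2*n" using n1 by auto
    have E0: "eta (EE 0) = 0" "eta (EE 1) = 0" using E_D[OF l(1)] E_D[OF l(2)] by blast+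
    have "EE 0 = phi (phi (EE 0))" using E0 by simp
    also have "\<dots> = p *\<^sub>R phi (EE 0) + q *\<^sub>R phi (EE 1)" by (simp only: ph0 phi_lin)
    also have "\<dots> = (p*p + q*r) *\<^sub>R EE 0 + (p*q + q * s) *\<^sub>R EE 1"
      by (simp only: ph0 ph1) (simp add: algebra_simps)
    finally have E: "EE 0 = (p*p + q*r) *\<^sub>R EE 0 + (p*q + q * s) *\<^sub>R EE 1" .
    have "(\<Sum>j<2*n. (if j = 0 then p*p + q*r - 1 else p*q + q * s) *\<^sub>R EE j)
        = (p*p + q*r - 1) *\<^sub>R EE 0 + (p*q + q * s) *\<^sub>R EE 1"
      by (simp only: N sum2) simp
    also have "\<dots> = ((p*p + q*r) *\<^sub>R EE 0 + (p*q + q * s) *\<^sub>R EE 1) - EE 0"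
      by (simp add: algebra_simps)
    also have "\<dots> = 0" by (simp only: E[symmetric]) simp
    finally have "(\<Sum>j<2*n. (if j = 0 then p*p + q*r - 1 else p*q + q * s) *\<^sub>R EE j) = 0" .
    from coeff0[OF DbE this, of 0] show ?thesis using N by simp
  qed
  have b01: "T x (EE 0) (EE 1) = 0"
  proof -
    have "T x (EE 0) (EE 1) = T x (phi (EE 0)) (phi (EE 1))" by (rule p23[symmetric])
    also have "\<dots> = (p * s - q * r) * T x (EE 0) (EE 1)"
      using sk[of x "EE 1" "EE 0"] by (simp only: ph0 ph1) (simp add: tl diag algebra_simps)
    also have "p * s - q * r = -1"
    proof -
      have "s = - p" using ps by simp
      then have "p * s = - (p * p)" by simp
      then show ?thesis using pq by linarith
    qed
    finally show ?thesis by simp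
  qed
  have bD: "T x a b = 0" if "eta a = 0" "eta b = 0" for a b
  proof -
    have a: "a = g (WW 0) a *\<^sub>R EE 0 + g (WW 1) a *\<^sub>R EE 1" using expand1[OF that(1)] by (simp add: N sum2)
    have b: "b = g (WW 0) b *\<^sub>R EE 0 + g (WW 1) b *\<^sub>R EE 1" using expand1[OF that(2)] by (simp add: N sum2)
    have "T x a b = T x (g (WW 0) a *\<^sub>R EE 0 + g (WW 1) a *\<^sub>R EE 1) (g (WW 0) b *\<^sub>R EE 0 + g (WW 1) b *\<^sub>R EE 1)"
      using a b by simp
    also have "\<dots> = 0" using b01 sk[of x "EE 1" "EE 0"] by (simp add: tl diag)
    finally show ?thesis .
  qed
  have "T x y z = T x (phi y) (phi z)" by (rule p23[symmetric])
  also have "\<dots> = 0" by (rule bD) simp_all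
  finally show ?thesis .
qed


lemma C1t_props:
  assumes lt: "linear th"
  shows "Fspace phi xi eta (C1t th)" "C1t th (phi x) (phi y) z = - C1t th x y z"
proof -
  note lr = lin_rules[OF lt]
  have gs: "\<And>a b. g (phi a) b = - g a (phi b)" by (rule g_phi_skew)
  have tri: "trilinear (C1t th)"
    by (rule trilinearI) (simp_all add: C1t_def lr algebra_simps)
  show "Fspace phi xi eta (C1t th)" unfolding Fspace_def
  proof (intro conjI allI)
    show "trilinear (C1t th)" by (rule tri)
    fix x y z
    show "C1t th x y z = - C1t th x z y" by (simp add: C1t_def algebra_simps)
    have z0: "C1t th x a xi = 0" for a by (simp add: C1t_def lr)
    show "C1t th x y z = C1t th x (phi y) (phi z) - eta y * C1t th x z xi + eta z * C1t th x y xi"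
      using gs[of x y] gs[of x z] by (simp add: z0 C1t_def lr algebra_simps)
  qed
  show "C1t th (phi x) (phi y) z = - C1t th x y z"
    using gs[of x y] gs[of x z] by (simp add: C1t_def lr algebra_simps)
qed

lemma zero_Fspace: "Fspace phi xi eta (\<lambda>x y z. 0)"
  unfolding Fspace_def by (simp add: trilinearI)

lemma G12:
  assumes hT: "hor T" and anti: "\<And>x y z. T (phi x) (phi y) z = - T x y z"
  shows "\<exists>C1 C2. GC 1 C1 \<and> GC 2 C2 \<and> (\<forall>x y z. T x y z = C1 x y z + C2 x y z)"
proof (cases "n = 1")
  case True
  have T0: "\<And>x y z. T x y z = 0" using hor_n1[OF True hT] .
  have "GC 1 (\<lambda>x y z. 0)" using GC_iff(8)[OF True] zero_Fspace by simp
  moreover have "GC 2 T" unfolding GC_iff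
  proof (intro conjI allI)
    show "Fspace phi xi eta T" by (rule hor_Fspace[OF hT])
    fix x y z
    show "T (phi x) (phi y) z = - T x y z" by (rule anti)
    show "theta n g eta T x = 0" by (simp add: theta_eq T0)
  qed
  ultimately show ?thesis by (intro exI[of _ "\<lambda>x y z. 0"] exI[of _ T]) simp
next
  case False
  note tT = horD(1)[OF hT]
  define th where "th = theta n g eta T"
  have lt: "linear th" unfolding th_def by (rule theta_linear[OF tT])
  note lr = lin_rules[OF lt]
  have thxi: "th xi = 0" unfolding th_def by (simp add: theta_eq horD(4)[OF hT])
  have fs1: "Fspace phi xi eta (C1t th)" and an1: "\<And>x y z. C1t th (phi x) (phi y) z = - C1t th x y z"
    using C1t_props[OF lt] by blast+
  have tC1: "trilinear (C1t th)" using fs1 unfolding Fspace_def by blast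
  have th1: "\<And>w. theta n g eta (C1t th) w = th (phi (phi w))" using theta_C1t[OF lt False] .
  have "GC 1 (C1t th)" unfolding GC_iff(9)[OF False]
  proof (intro conjI allI)
    show "Fspace phi xi eta (C1t th)" by (rule fs1)
    fix x y z
    show "C1t th x y z = 1 / (2 * (real n - 1)) *
          (g x (phi y) * theta n g eta (C1t th) (phi z) - g x (phi z) * theta n g eta (C1t th) (phi y)
           - g (phi x) (phi y) * theta n g eta (C1t th) (phi (phi z)) + g (phi x) (phi z) * theta n g eta (C1t th) (phi (phi y)))"
      by (simp add: th1 C1t_def lr)
  qed
  moreover have "GC 2 (\<lambda>x y z. 1 * T x y z + (-1) * C1t th x y z)" unfolding GC_iff
  proof (intro conjI allI)
    show "Fspace phi xi eta (\<lambda>x y z. 1 * T x y z + (-1) * C1t th x y z)"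
      by (rule Fspace_comb[OF hor_Fspace[OF hT] fs1])
    fix x y z
    show "1 * T (phi x) (phi y) z + (-1) * C1t th (phi x) (phi y) z = - (1 * T x y z + (-1) * C1t th x y z)"
      using anti[of x y z] an1[of x y z] by simp
    show "theta n g eta (\<lambda>x y z. 1 * T x y z + (-1) * C1t th x y z) x = 0"
      using theta_comb[OF tT tC1, of 1 "-1" x] th1[of x] thxi by (simp add: th_def[symmetric] lr)
  qed
  ultimately show ?thesis by (intro exI[of _ "C1t th"] exI[of _ "\<lambda>x y z. 1 * T x y z + (-1) * C1t th x y z"]) simp
qed

end


context apc begin

lemma hor_swap:
  assumes hT: "hor T"
  shows "hor (\<lambda>x y z. T (phi x) (phi y) z)"
proof -
  note tl = tri_lin[OF horD(1)[OF hT]]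
  have sk: "\<And>x y z. T x y z = - T x z y" by (rule horD(5)[OF hT])
  have p23: "\<And>x y z. T x (phi y) (phi z) = T x y z" by (rule horD(6)[OF hT])
  show ?thesis unfolding hor_def
  proof (intro conjI allI)
    show "trilinear (\<lambda>x y z. T (phi x) (phi y) z)" by (rule trilinearI) (simp_all add: tl)
    fix x y z
    show "T (phi xi) (phi y) z = 0" "T (phi x) (phi xi) z = 0" "T (phi x) (phi y) xi = 0"
      using horD(4)[OF hT] by (simp_all add: tl)
    have a: "T (phi x) (phi (phi z)) (phi y) = T (phi x) (phi z) y" by (rule p23)
    have b: "T (phi x) (phi (phi z)) (phi y) = T (phi x) z (phi y)" using horD(3)[OF hT] by (simp add: tl)
    show "T (phi x) (phi y) z = - T (phi x) (phi z) y"
      using a b sk[of "phi x" z "phi y"] by simp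
    show "T (phi x) (phi (phi y)) (phi z) = T (phi x) (phi y) z" by (rule p23)
  qed
qed

context
  fixes F assumes FS: "Fspace phi xi eta F" and KF: "Kil F"
begin

lemma F_tri: "trilinear F" using FS unfolding Fspace_def by blast
lemmas tlF = tri_lin[OF F_tri]
lemma F_sk: "F x y z = - F x z y" using FS unfolding Fspace_def by blast
lemma F_fs: "F x y z = F x (phi y) (phi z) - eta y * F x z xi + eta z * F x y xi" using FS unfolding Fspace_def by blast
lemma F_xx: "F a xi xi = 0" using F_sk[of a xi xi] by simp
lemma F_K: "F x (phi y) xi + F y (phi x) xi = 0" using KF by blast
lemma F_xbx: "F xi b xi = 0"
proof -
  have "F xi (phi (phi b)) xi = 0" using F_K[of xi "phi b"] by (simp add: tlF)
  then show ?thesis by (simp add: tlF F_xx)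
qed

lemma F_fs': "F a (phi y) (phi z) = F a y z - eta y * F a xi z - eta z * F a y xi"
  using F_fs[of a y z] F_sk[of a z xi] by simp

definition "VV x y z = F x (phi y) (phi z) - eta x * F xi (phi y) (phi z)"

lemma VV_hor: "hor VV"
  unfolding hor_def
proof (intro conjI allI)
  show "trilinear VV" by (rule trilinearI) (simp_all add: VV_def tlF algebra_simps)
  fix x y z
  show "VV xi y z = 0" "VV x xi z = 0" "VV x y xi = 0" by (simp_all add: VV_def tlF)
  show "VV x y z = - VV x z y" using F_sk[of x "phi y" "phi z"] F_sk[of xi "phi y" "phi z"] by (simp add: VV_def)
  show "VV x (phi y) (phi z) = VV x y z"
    by (simp only: VV_def F_fs'[of x y z] F_fs'[of xi y z]) (simp add: tlF F_xx algebra_simps)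
qed


definition "VS x y z = VV (phi x) (phi y) z"
definition "Vm x y z = (1/2) * VV x y z + (-1/2) * VS x y z"
definition "Vp x y z = (1/2) * VV x y z + (1/2) * VS x y z"

lemma VS_hor: "hor VS"
  using hor_swap[OF VV_hor] unfolding VS_def[abs_def] .

lemma Vm_hor: "hor Vm" unfolding Vm_def[abs_def] by (rule hor_comb[OF VV_hor VS_hor])
lemma Vp_hor: "hor Vp" unfolding Vp_def[abs_def] by (rule hor_comb[OF VV_hor VS_hor])

lemma VV_hh: "VV (phi (phi x)) (phi (phi y)) z = VV x y z"
  using horD(2,3)[OF VV_hor] by (simp add: tri_lin[OF horD(1)[OF VV_hor]])

lemma Vm_anti: "Vm (phi x) (phi y) z = - Vm x y z"
  by (simp only: Vm_def VS_def VV_hh)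

lemma Vp_inv: "Vp (phi x) (phi y) z = Vp x y z"
  by (simp only: Vp_def VS_def VV_hh)

definition "Bsa x y = (1/4) * (F x y xi + F y x xi - F (phi x) (phi y) xi - F (phi y) (phi x) xi)"
definition "Bai x y = (1/4) * (F x y xi - F y x xi + F (phi x) (phi y) xi - F (phi y) (phi x) xi)"

lemma B_sum: "F x y xi = Bsa x y + Bai x y"
proof -
  have "F x (phi (phi y)) xi + F (phi y) (phi x) xi = 0" by (rule F_K)
  then have "F x y xi + F (phi y) (phi x) xi = 0" by (simp add: tlF F_xx)
  then show ?thesis by (simp add: Bsa_def Bai_def algebra_simps)
qed

lemma Bsa_bil: "bilinear_form Bsa"
  unfolding bilinear_form_def by (auto intro!: linearI simp: Bsa_def tlF algebra_simps add_divide_distrib diff_divide_distrib)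
lemma Bai_bil: "bilinear_form Bai"
  unfolding bilinear_form_def by (auto intro!: linearI simp: Bai_def tlF algebra_simps add_divide_distrib diff_divide_distrib)

lemma Bsa_xi: "Bsa x xi = 0" by (simp add: Bsa_def tlF F_xx F_xbx)
lemma Bai_xi: "Bai x xi = 0" by (simp add: Bai_def tlF F_xx F_xbx)
lemma Bsa_sym: "Bsa x y = Bsa y x" by (simp add: Bsa_def algebra_simps)
lemma Bai_skew: "Bai x y = - Bai y x" by (simp add: Bai_def algebra_simps)
lemma Bsa_anti: "Bsa (phi x) (phi y) = - Bsa x y" by (simp add: Bsa_def tlF F_xx F_xbx algebra_simps)
lemma Bai_inv: "Bai (phi x) (phi y) = Bai x y" by (simp add: Bai_def tlF F_xx F_xbx algebra_simps)

end

lemma bil_rules: assumes "bilinear_form b"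
  shows "b (x+y) z = b x z + b y z" "b x (y+z) = b x y + b x z"
  "b (c *\<^sub>R x) y = c * b x y" "b x (c *\<^sub>R y) = c * b x y"
  "b (x - y) z = b x z - b y z" "b x (y-z) = b x y - b x z"
  "b 0 y = 0" "b x 0 = 0"
  using assms unfolding bilinear_form_def
  by (simp_all add: linear_add[of "\<lambda>x. b x _"] linear_add[of "b _"] linear_scale[of "\<lambda>x. b x _"] linear_scale[of "b _"]
     linear_diff[of "\<lambda>x. b x _"] linear_diff[of "b _"] linear_0[of "\<lambda>x. b x _"] linear_0[of "b _"])

lemma Eb_Fspace:
  assumes bb: "bilinear_form b" and bx: "\<And>x. b x xi = 0"
  shows "Fspace phi xi eta (\<lambda>x y z. - eta y * b x z + eta z * b x y)"
  unfolding Fspace_def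
proof (intro conjI allI)
  note br = bil_rules[OF bb]
  show "trilinear (\<lambda>x y z. - eta y * b x z + eta z * b x y)"
    by (rule trilinearI) (simp_all add: br algebra_simps)
  fix x y z
  show "- eta y * b x z + eta z * b x y = - (- eta z * b x y + eta y * b x z)" by simp
  show "- eta y * b x z + eta z * b x y = - eta (phi y) * b x (phi z) + eta (phi z) * b x (phi y) -
    eta y * (- eta z * b x xi + eta xi * b x z) + eta z * (- eta y * b x xi + eta xi * b x y)"
    by (simp add: bx)
qed

definition "C5t c x y z = c / (2 * real n) * (eta y * g (phi x) (phi z) - eta z * g (phi x) (phi y))"

lemma C5t_Fspace: "Fspace phi xi eta (C5t c)"
  unfolding Fspace_def
proof (intro conjI allI)
  show "trilinear (C5t c)" by (rule trilinearI) (simp_all add: C5t_def algebra_simps)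
  fix x y z
  show "C5t c x y z = - C5t c x z y" by (simp add: C5t_def algebra_simps)
  show "C5t c x y z = C5t c x (phi y) (phi z) - eta y * C5t c x z xi + eta z * C5t c x y xi"
    by (simp add: C5t_def algebra_simps)
qed

lemma theta_C5t: "theta n g eta (C5t c) xi = c"
proof -
  have "theta n g eta (C5t c) xi = c / (2 * real n) * (\<Sum>i<2*n. \<Sum>j<2*n. GI i j * g (EE i) (EE j))"
    unfolding theta_eq C5t_def by (simp add: sum_distrib_left algebra_simps del: phi_phi)
  then show ?thesis using trace_g n1 by simp
qed

lemma GC5: "GC 5 (C5t (theta n g eta T xi))" (is "GC 5 ?C")
  unfolding GC_iff
proof (intro conjI allI)
  show "Fspace phi xi eta ?C" by (rule C5t_Fspace)
  fix x y z
  show "?C x y z = theta n g eta ?C xi / (2 * real n) * (eta y * g (phi x) (phi z) - eta z * g (phi x) (phi y))"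
    by (simp only: theta_C5t) (simp add: C5t_def)
qed


context
  fixes F assumes FS: "Fspace phi xi eta F" and KF: "Kil F"
begin

lemma Kil_in_class: "in_class n g phi xi eta {1,2,3,4,5,8,9,11} F"
proof -
  note tlF = tlF[OF FS KF]
  obtain C1 C2 where c1: "GC 1 C1" and c2: "GC 2 C2" and s12: "\<forall>x y z. Vm F x y z = C1 x y z + C2 x y z"
    using G12[OF Vm_hor[OF FS KF] Vm_anti[OF FS KF]] by blast
  define C3 where "C3 = (\<lambda>x y z. (1/3) * (Vp F x y z + Vp F y z x + Vp F z x y))"
  define C4 where "C4 = (\<lambda>x y z. 1 * Vp F x y z + (-1) * C3 x y z)"
  have c3: "GC 3 C3" and c4: "GC 4 C4"
    using G34[OF Vp_hor[OF FS KF] Vp_inv[OF FS KF]] unfolding C3_def C4_def by blast+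
  define Esa where "Esa = (\<lambda>x y z. - eta y * Bsa F x z + eta z * Bsa F x y)"
  define Eai where "Eai = (\<lambda>x y z. - eta y * Bai F x z + eta z * Bai F x y)"
  define c where "c = theta n g eta Esa xi"
  define C8 where "C8 = (\<lambda>x y z. 1 * Esa x y z + (-1) * C5t c x y z)"
  define C11 where "C11 = (\<lambda>x y z. eta x * F xi (phi y) (phi z))"
  note bsa = bil_rules[OF Bsa_bil[OF FS KF]]
  note bai = bil_rules[OF Bai_bil[OF FS KF]]
  have fEsa: "Fspace phi xi eta Esa" unfolding Esa_def by (rule Eb_Fspace[OF Bsa_bil[OF FS KF] Bsa_xi[OF FS KF]])
  have fEai: "Fspace phi xi eta Eai" unfolding Eai_def by (rule Eb_Fspace[OF Bai_bil[OF FS KF] Bai_xi[OF FS KF]])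
  have tEsa: "trilinear Esa" using fEsa unfolding Fspace_def by blast
  have tC5: "trilinear (C5t c)" using C5t_Fspace unfolding Fspace_def by blast
  have c5: "GC 5 (C5t c)" unfolding c_def by (rule GC5)
  have c8: "GC 8 C8" unfolding GC_iff
  proof (intro conjI allI)
    show "Fspace phi xi eta C8" unfolding C8_def by (rule Fspace_comb[OF fEsa C5t_Fspace])
    fix x y z
    show "C8 x y z = - eta y * C8 x z xi + eta z * C8 x y xi"
      by (simp add: C8_def Esa_def C5t_def Bsa_xi[OF FS KF] algebra_simps)
    show "C8 x y xi = C8 y x xi"
      using Bsa_sym[OF FS KF, of x y] g_sym[of "phi x" "phi y"]
      by (simp add: C8_def Esa_def C5t_def Bsa_xi[OF FS KF])
    show "C8 x y xi = - C8 (phi x) (phi y) xi"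
      using Bsa_anti[OF FS KF, of x y]
      by (simp add: C8_def Esa_def C5t_def Bsa_xi[OF FS KF] del: phi_phi)
        (metis minus_diff_eq minus_divide_left mult_minus_right)
    show "theta n g eta C8 xi = 0"
      unfolding C8_def using theta_comb[OF tEsa tC5, of 1 "-1" xi] theta_C5t[of c] by (simp add: c_def)
  qed
  have c9: "GC 9 Eai" unfolding GC_iff
  proof (intro conjI allI)
    show "Fspace phi xi eta Eai" by (rule fEai)
    fix x y z
    show "Eai x y z = - eta y * Eai x z xi + eta z * Eai x y xi"
      by (simp add: Eai_def Bai_xi[OF FS KF] algebra_simps)
    show "Eai x y xi = - Eai y x xi"
      using Bai_skew[OF FS KF, of x y] by (simp add: Eai_def Bai_xi[OF FS KF])
    show "Eai x y xi = Eai (phi x) (phi y) xi"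
      using Bai_inv[OF FS KF, of x y] by (simp add: Eai_def Bai_xi[OF FS KF] del: phi_phi)
  qed
  have c11: "GC 11 C11" unfolding GC_iff
  proof (intro conjI allI)
    show "Fspace phi xi eta C11" unfolding Fspace_def
    proof (intro conjI allI)
      show "trilinear C11" by (rule trilinearI) (simp_all add: C11_def tlF algebra_simps)
      fix x y z
      show "C11 x y z = - C11 x z y" using F_sk[OF FS KF, of xi "phi y" "phi z"] by (simp add: C11_def)
      show "C11 x y z = C11 x (phi y) (phi z) - eta y * C11 x z xi + eta z * C11 x y xi"
        by (simp only: C11_def F_fs'[OF FS KF, of xi y z]) (simp add: tlF F_xx[OF FS KF] algebra_simps)
    qed
    fix x y z
    show "C11 x y z = eta x * C11 xi (phi y) (phi z)"
      by (simp only: C11_def F_fs'[OF FS KF, of xi y z]) (simp add: tlF F_xx[OF FS KF] algebra_simps)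
  qed
  define C where "C = (\<lambda>i::nat. if i = 1 then C1 else if i = 2 then C2 else if i = 3 then C3 else if i = 4 then C4
      else if i = 5 then C5t c else if i = 8 then C8 else if i = 9 then Eai else C11)"
  have allC: "\<forall>i\<in>{1,2,3,4,5,8,9,11}. GC i (C i)"
    using c1 c2 c3 c4 c5 c8 c9 c11 by (simp add: C_def)
  have sumC: "\<forall>x y z. F x y z = (\<Sum>i\<in>{1,2,3,4,5,8,9,11}. C i x y z)"
  proof (intro allI)
    fix x y z
    have e1: "C1 x y z + C2 x y z = Vm F x y z" using s12 by simp
    have e2: "C3 x y z + C4 x y z = Vp F x y z" by (simp add: C4_def)
    have e3: "Vm F x y z + Vp F x y z = VV F x y z" by (simp add: Vm_def[OF FS KF] Vp_def[OF FS KF])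
    have e4: "C5t c x y z + C8 x y z = Esa x y z" by (simp add: C8_def)
    have e5: "Esa x y z + Eai x y z = - eta y * F x z xi + eta z * F x y xi"
      using B_sum[OF FS KF, of x z] B_sum[OF FS KF, of x y] by (simp add: Esa_def Eai_def algebra_simps)
    have e6: "VV F x y z + (- eta y * F x z xi + eta z * F x y xi) + C11 x y z = F x y z"
      using F_fs[OF FS KF, of x y z] by (simp add: VV_def[OF FS KF] C11_def)
    have "(\<Sum>i\<in>{1,2,3,4,5,8,9,11}. C i x y z) = C1 x y z + C2 x y z + (C3 x y z + C4 x y z) +
         (C5t c x y z + C8 x y z) + Eai x y z + C11 x y z"
      by (simp add: C_def algebra_simps)
    also have "\<dots> = F x y z" using e1 e2 e3 e4 e5 e6 by simp
    finally show "F x y z = (\<Sum>i\<in>{1,2,3,4,5,8,9,11}. C i x y z)" by simp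
  qed
  show ?thesis unfolding in_class_def using allC sumC by blast
qed

end

end


lemma smooth_diff_at:
  assumes "open U" "p \<in> U" "smooth_on U f"
  shows "f differentiable (at p)"
proof -
  have "Ck_on (Suc 0) U f" using assms(3) unfolding smooth_on_def by blast
  then have "f differentiable_on U" by simp
  then show ?thesis using assms(1,2) differentiable_on_eq_differentiable_at by blast
qed

lemma vec_diff_at:
  fixes Y :: "real^'n::finite \<Rightarrow> real^'k::finite"
  assumes "\<And>i. (\<lambda>q. Y q $ i) differentiable (at p)"
  shows "Y differentiable (at p)"
proof -
  have "\<forall>b\<in>Basis. (\<lambda>q. Y q \<bullet> b) differentiable (at p within UNIV)"
  proof
    fix b :: "real^'k" assume "b \<in> Basis"
    then obtain k where b: "b = axis k 1" unfolding Basis_vec_def by auto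
    show "(\<lambda>q. Y q \<bullet> b) differentiable (at p within UNIV)"
      using assms[of k] by (simp add: b cart_eq_inner_axis[symmetric])
  qed
  then show ?thesis using differentiable_componentwise_within[of Y p UNIV] by simp
qed

lemma dd_works: "f differentiable (at p) \<Longrightarrow> (f has_derivative dd f p) (at p)"
  unfolding dd_def by (rule frechet_derivative_works[THEN iffD1])

lemma dd_eq: "(f has_derivative D) (at p) \<Longrightarrow> dd f p = D"
  unfolding dd_def using frechet_derivative_at by metis

lemma dd_local:
  assumes "open U" "p \<in> U" "\<And>q. q \<in> U \<Longrightarrow> f q = f' q" "(f has_derivative D) (at p)"
  shows "dd f' p = D"
  using has_derivative_transform_within_open[OF assms(4) assms(1) assms(2) assms(3)] dd_eq by blast

lemma dd_const: "dd (\<lambda>q. c) p = (\<lambda>x. 0)"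
  by (rule dd_eq) (rule has_derivative_const)

lemma dd_linear: "f differentiable (at p) \<Longrightarrow> linear (dd f p)"
  using dd_works has_derivative_linear by blast

lemma bil_expand:
  fixes B :: "real^'n::finite \<Rightarrow> real^'n \<Rightarrow> real"
  assumes "\<And>y. linear (\<lambda>x. B x y)" "\<And>x. linear (B x)"
  shows "B a b = (\<Sum>i\<in>UNIV. \<Sum>j\<in>UNIV. (a $ i) * (b $ j) * B (axis i 1) (axis j 1))"
proof -
  have a: "a = (\<Sum>i\<in>UNIV. (a $ i) *\<^sub>R axis i 1)" using basis_expansion[of a] by (simp add: scalar_mult_eq_scaleR)
  have b: "b = (\<Sum>j\<in>UNIV. (b $ j) *\<^sub>R axis j 1)" using basis_expansion[of b] by (simp add: scalar_mult_eq_scaleR)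
  have "B a b = (\<Sum>i\<in>UNIV. (a $ i) * B (axis i 1) b)"
    by (subst a) (simp add: linear_sum[OF assms(1)] linear_scale[OF assms(1)])
  also have "\<dots> = (\<Sum>i\<in>UNIV. (a $ i) * (\<Sum>j\<in>UNIV. (b $ j) * B (axis i 1) (axis j 1)))"
    by (subst b) (simp add: linear_sum[OF assms(2)] linear_scale[OF assms(2)])
  finally show ?thesis by (simp add: sum_distrib_left mult.assoc)
qed

lemma lin_expand:
  fixes L :: "real^'n::finite \<Rightarrow> real^'k::finite"
  assumes "linear L"
  shows "L a = (\<Sum>i\<in>UNIV. (a $ i) *\<^sub>R L (axis i 1))"
proof -
  have a: "a = (\<Sum>i\<in>UNIV. (a $ i) *\<^sub>R axis i 1)" using basis_expansion[of a] by (simp add: scalar_mult_eq_scaleR)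
  show ?thesis by (subst a) (simp add: linear_sum[OF assms] linear_scale[OF assms])
qed

lemma has_derivative_nth:
  "(Y has_derivative Y') F \<Longrightarrow> ((\<lambda>q. Y q $ i) has_derivative (\<lambda>x. Y' x $ i)) F"
  by (rule bounded_linear.has_derivative[OF bounded_linear_vec_nth])


lemma dd_G_expand:
  fixes G :: "real^'n::finite \<Rightarrow> real^'n \<Rightarrow> real^'n \<Rightarrow> real"
  assumes U: "open U" "p \<in> U" and bil: "\<And>q y. q \<in> U \<Longrightarrow> linear (\<lambda>x. G q x y)" "\<And>q x. q \<in> U \<Longrightarrow> linear (G q x)"
    and dG: "\<And>a b. (\<lambda>q. G q a b) differentiable (at p)"
  shows "dd (\<lambda>q. G q a b) p = (\<lambda>x. \<Sum>i\<in>UNIV. \<Sum>j\<in>UNIV. (a $ i) * (b $ j) * dd (\<lambda>q. G q (axis i 1) (axis j 1)) p x)"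
proof (rule dd_local[OF U])
  show "(\<Sum>i\<in>UNIV. \<Sum>j\<in>UNIV. (a $ i) * (b $ j) * G q (axis i 1) (axis j 1)) = G q a b" if "q \<in> U" for q
    using bil_expand[of "G q" a b, OF bil(1)[OF that] bil(2)[OF that]] by simp
  show "((\<lambda>q. \<Sum>i\<in>UNIV. \<Sum>j\<in>UNIV. (a $ i) * (b $ j) * G q (axis i 1) (axis j 1)) has_derivative
     (\<lambda>x. \<Sum>i\<in>UNIV. \<Sum>j\<in>UNIV. (a $ i) * (b $ j) * dd (\<lambda>q. G q (axis i 1) (axis j 1)) p x)) (at p)"
    by (intro has_derivative_sum has_derivative_mult_right dd_works dG)
qed

lemma dd_P_expand:
  fixes P :: "real^'n::finite \<Rightarrow> real^'n \<Rightarrow> real^'k::finite"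
  assumes U: "open U" "p \<in> U" and lin: "\<And>q. q \<in> U \<Longrightarrow> linear (P q)"
    and dP: "\<And>a. (\<lambda>q. P q a) differentiable (at p)"
  shows "dd (\<lambda>q. P q a) p = (\<lambda>x. \<Sum>i\<in>UNIV. (a $ i) *\<^sub>R dd (\<lambda>q. P q (axis i 1)) p x)"
proof (rule dd_local[OF U])
  show "(\<Sum>i\<in>UNIV. (a $ i) *\<^sub>R P q (axis i 1)) = P q a" if "q \<in> U" for q
    using lin_expand[of "P q" a, OF lin[OF that]] by simp
  show "((\<lambda>q. \<Sum>i\<in>UNIV. (a $ i) *\<^sub>R P q (axis i 1)) has_derivative
     (\<lambda>x. \<Sum>i\<in>UNIV. (a $ i) *\<^sub>R dd (\<lambda>q. P q (axis i 1)) p x)) (at p)"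
    by (intro has_derivative_sum has_derivative_scaleR_right dd_works dP)
qed

lemma PR_g:
  fixes G :: "real^'n::finite \<Rightarrow> real^'n \<Rightarrow> real^'n \<Rightarrow> real"
  assumes U: "open U" "p \<in> U" and bil: "\<And>q y. q \<in> U \<Longrightarrow> linear (\<lambda>x. G q x y)" "\<And>q x. q \<in> U \<Longrightarrow> linear (G q x)"
    and dG: "\<And>a b. (\<lambda>q. G q a b) differentiable (at p)"
    and dY: "(Y has_derivative Y') (at p)" and dZ: "(Z has_derivative Z') (at p)"
  shows "((\<lambda>q. G q (Y q) (Z q)) has_derivative
     (\<lambda>x. dd (\<lambda>q. G q (Y p) (Z p)) p x + G p (Y' x) (Z p) + G p (Y p) (Z' x))) (at p)"
proof -
  let ?S = "\<lambda>q. \<Sum>i\<in>UNIV. \<Sum>j\<in>UNIV. (Y q $ i) * (Z q $ j) * G q (axis i 1) (axis j 1)"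
  have D0: "(?S has_derivative (\<lambda>x. \<Sum>i\<in>UNIV. \<Sum>j\<in>UNIV.
      (Y p $ i) * (Z p $ j) * dd (\<lambda>q. G q (axis i 1) (axis j 1)) p x +
      ((Y' x $ i) * (Z p $ j) * G p (axis i 1) (axis j 1) + (Y p $ i) * (Z' x $ j) * G p (axis i 1) (axis j 1)))) (at p)"
    apply (rule has_derivative_eq_rhs)
     apply (rule has_derivative_sum)+
     apply (rule has_derivative_mult | rule has_derivative_nth | rule dY | rule dZ | rule dd_works | rule dG)+
    apply (simp add: fun_eq_iff algebra_simps)
    done
  have eqS: "?S q = G q (Y q) (Z q)" if "q \<in> U" for q
    using bil_expand[of "G q" "Y q" "Z q", OF bil(1)[OF that] bil(2)[OF that]] by simp
  have D: "((\<lambda>q. G q (Y q) (Z q)) has_derivative (\<lambda>x. \<Sum>i\<in>UNIV. \<Sum>j\<in>UNIV.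
      (Y p $ i) * (Z p $ j) * dd (\<lambda>q. G q (axis i 1) (axis j 1)) p x +
      ((Y' x $ i) * (Z p $ j) * G p (axis i 1) (axis j 1) + (Y p $ i) * (Z' x $ j) * G p (axis i 1) (axis j 1)))) (at p)"
    by (rule has_derivative_transform_within_open[OF D0 U(1) U(2) eqS])
  show ?thesis
  proof (rule has_derivative_eq_rhs[OF D], rule ext)
    fix x
    have e1: "G p (Y' x) (Z p) = (\<Sum>i\<in>UNIV. \<Sum>j\<in>UNIV. (Y' x $ i) * (Z p $ j) * G p (axis i 1) (axis j 1))"
      using bil_expand[of "G p" "Y' x" "Z p", OF bil(1)[OF U(2)] bil(2)[OF U(2)]] by simp
    have e2: "G p (Y p) (Z' x) = (\<Sum>i\<in>UNIV. \<Sum>j\<in>UNIV. (Y p $ i) * (Z' x $ j) * G p (axis i 1) (axis j 1))"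
      using bil_expand[of "G p" "Y p" "Z' x", OF bil(1)[OF U(2)] bil(2)[OF U(2)]] by simp
    have e3: "dd (\<lambda>q. G q (Y p) (Z p)) p x = (\<Sum>i\<in>UNIV. \<Sum>j\<in>UNIV. (Y p $ i) * (Z p $ j) * dd (\<lambda>q. G q (axis i 1) (axis j 1)) p x)"
      using dd_G_expand[OF U bil dG, of "Y p" "Z p"] by simp
    show "(\<Sum>i\<in>UNIV. \<Sum>j\<in>UNIV.
      (Y p $ i) * (Z p $ j) * dd (\<lambda>q. G q (axis i 1) (axis j 1)) p x +
      ((Y' x $ i) * (Z p $ j) * G p (axis i 1) (axis j 1) + (Y p $ i) * (Z' x $ j) * G p (axis i 1) (axis j 1)))
      = dd (\<lambda>q. G q (Y p) (Z p)) p x + G p (Y' x) (Z p) + G p (Y p) (Z' x)"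
      by (simp only: e1 e2 e3 sum.distrib add.assoc)
  qed
qed

lemma PR_phi:
  fixes P :: "real^'n::finite \<Rightarrow> real^'n \<Rightarrow> real^'k::finite"
  assumes U: "open U" "p \<in> U" and lin: "\<And>q. q \<in> U \<Longrightarrow> linear (P q)"
    and dP: "\<And>a. (\<lambda>q. P q a) differentiable (at p)"
    and dY: "(Y has_derivative Y') (at p)"
  shows "((\<lambda>q. P q (Y q)) has_derivative (\<lambda>x. dd (\<lambda>q. P q (Y p)) p x + P p (Y' x))) (at p)"
proof -
  let ?S = "\<lambda>q. \<Sum>i\<in>UNIV. (Y q $ i) *\<^sub>R P q (axis i 1)"
  have D0: "(?S has_derivative (\<lambda>x. \<Sum>i\<in>UNIV. (Y p $ i) *\<^sub>R dd (\<lambda>q. P q (axis i 1)) p x + (Y' x $ i) *\<^sub>R P p (axis i 1))) (at p)"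
    apply (rule has_derivative_eq_rhs)
     apply (rule has_derivative_sum)+
     apply (rule has_derivative_scaleR | rule has_derivative_nth | rule dY | rule dd_works | rule dP)+
    apply (simp add: fun_eq_iff algebra_simps)
    done
  have eqS: "?S q = P q (Y q)" if "q \<in> U" for q
    using lin_expand[of "P q" "Y q", OF lin[OF that]] by simp
  have D: "((\<lambda>q. P q (Y q)) has_derivative
      (\<lambda>x. \<Sum>i\<in>UNIV. (Y p $ i) *\<^sub>R dd (\<lambda>q. P q (axis i 1)) p x + (Y' x $ i) *\<^sub>R P p (axis i 1))) (at p)"
    by (rule has_derivative_transform_within_open[OF D0 U(1) U(2) eqS])
  show ?thesis
  proof (rule has_derivative_eq_rhs[OF D], rule ext)
    fix x
    have e1: "P p (Y' x) = (\<Sum>i\<in>UNIV. (Y' x $ i) *\<^sub>R P p (axis i 1))" using lin_expand[of "P p" "Y' x", OF lin[OF U(2)]] by simp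
    have e3: "dd (\<lambda>q. P q (Y p)) p x = (\<Sum>i\<in>UNIV. (Y p $ i) *\<^sub>R dd (\<lambda>q. P q (axis i 1)) p x)"
      using dd_P_expand[OF U lin dP, of "Y p"] by simp
    show "(\<Sum>i\<in>UNIV. (Y p $ i) *\<^sub>R dd (\<lambda>q. P q (axis i 1)) p x + (Y' x $ i) *\<^sub>R P p (axis i 1))
      = dd (\<lambda>q. P q (Y p)) p x + P p (Y' x)"
      by (simp only: e1 e3 sum.distrib)
  qed
qed



lemma scalar_expand:
  fixes L :: "real^'n::finite \<Rightarrow> real"
  assumes "linear L"
  shows "L a = (\<Sum>i\<in>UNIV. (a $ i) * L (axis i 1))"
proof -
  have a: "a = (\<Sum>i\<in>UNIV. (a $ i) *\<^sub>R axis i 1)" using basis_expansion[of a] by (simp add: scalar_mult_eq_scaleR)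
  show ?thesis by (subst a) (simp add: linear_sum[OF assms] linear_scale[OF assms])
qed

context apc begin

lemma riesz: assumes "linear l" shows "\<exists>w. \<forall>z. g w z = l z"
proof -
  define T where "T w = (\<chi> i. g w (axis i 1))" for w
  have lin: "linear T" by (rule linearI) (simp_all add: T_def vec_eq_iff)
  have inj: "inj T"
  proof (rule linear_inj_iff_eq_0[OF lin, THEN iffD2], intro allI impI)
    fix w assume "T w = 0"
    then have z: "\<And>i. g w (axis i 1) = 0" by (simp add: T_def vec_eq_iff)
    have "g w z = 0" for z using scalar_expand[OF lin_g2, of w z] z by simp
    then show "w = 0" using nondeg by blast
  qed
  have surj: "surj T" by (metis linear_injective_imp_surjective lin inj)
  then obtain w where w: "T w = (\<chi> i. l (axis i 1))" by (metis surjD)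
  then have wi: "\<And>i. g w (axis i 1) = l (axis i 1)" by (simp add: T_def vec_eq_iff)
  have "g w z = l z" for z
    using scalar_expand[OF lin_g2, of w z] scalar_expand[OF assms, of z] wi by simp
  then show ?thesis by blast
qed

end

locale dsetup =
  fixes n :: nat and U :: "(real^'m::finite) set"
    and g :: "real^'m \<Rightarrow> real^'m \<Rightarrow> real^'m \<Rightarrow> real"
    and phi :: "real^'m \<Rightarrow> real^'m \<Rightarrow> real^'m"
    and xi :: "real^'m \<Rightarrow> real^'m"
    and eta :: "real^'m \<Rightarrow> real^'m \<Rightarrow> real"
    and p :: "real^'m"
  assumes n1: "n \<ge> 1" and card: "CARD('m) = 2 * n + 1" and oU: "open U"
    and sg: "\<forall>x y. smooth_on U (\<lambda>p. g p x y)"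
    and sphi: "\<forall>x i. smooth_on U (\<lambda>p. phi p x $ i)"
    and sxi: "\<forall>i. smooth_on U (\<lambda>p. xi p $ i)"
    and seta: "\<forall>x. smooth_on U (\<lambda>p. eta p x)"
    and apcU: "\<forall>p\<in>U. apcm_point (g p) (phi p) (xi p) (eta p)"
    and pU: "p \<in> U"
begin

lemma apcq: "q \<in> U \<Longrightarrow> apc n (g q) (phi q) (xi q) (eta q)"
  unfolding apc_def using apcU n1 card by blast

sublocale A: apc n "g p" "phi p" "xi p" "eta p" by (rule apcq[OF pU])

lemma dg: "(\<lambda>q. g q a b) differentiable (at p)"
  using smooth_diff_at[OF oU pU] sg by blast
lemma dphi: "(\<lambda>q. phi q a) differentiable (at p)"
  by (rule vec_diff_at) (use smooth_diff_at[OF oU pU] sphi in blast)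
lemma dxi: "xi differentiable (at p)"
  by (rule vec_diff_at) (use smooth_diff_at[OF oU pU] sxi in blast)
lemma deta: "(\<lambda>q. eta q a) differentiable (at p)"
  using smooth_diff_at[OF oU pU] seta by blast

lemma g_linq: "q \<in> U \<Longrightarrow> linear (\<lambda>x. g q x y)" "q \<in> U \<Longrightarrow> linear (g q x)"
  using apc.lin_g1[OF apcq] apc.lin_g2[OF apcq] by blast+
lemma phi_linq: "q \<in> U \<Longrightarrow> linear (phi q)"
  using apc.lin_phi[OF apcq] by blast

abbreviation "Dg x a b \<equiv> dd (\<lambda>q. g q a b) p x"
abbreviation "PP x a \<equiv> dd (\<lambda>q. phi q a) p x"
abbreviation "Dxi \<equiv> dd xi p"
abbreviation "Gam \<equiv> christoffel g p"

lemma dd_cong: "(\<And>q. q \<in> U \<Longrightarrow> f q = f' q) \<Longrightarrow> f differentiable (at p) \<Longrightarrow> dd f' p = dd f p"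
  using dd_local[OF oU pU] dd_works by blast

lemma Dg_lin1: "linear (\<lambda>x. Dg x a b)"
  by (rule dd_linear[OF dg])

lemma Dg_sym: "Dg x a b = Dg x b a"
proof -
  have "dd (\<lambda>q. g q a b) p = dd (\<lambda>q. g q b a) p"
    by (rule dd_cong) (use apc.g_sym[OF apcq] dg in auto)
  then show ?thesis by simp
qed

lemma Dg_add2: "Dg x (a1 + a2) b = Dg x a1 b + Dg x a2 b"
proof -
  have "dd (\<lambda>q. g q (a1 + a2) b) p = dd (\<lambda>q. g q a1 b + g q a2 b) p"
    by (rule dd_cong) (use apc.g_lin[OF apcq] dg in \<open>auto intro: differentiable_add\<close>)
  also have "\<dots> = (\<lambda>x. Dg x a1 b + Dg x a2 b)"
    by (rule dd_eq) (intro has_derivative_add dd_works dg)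
  finally show ?thesis by (simp add: fun_eq_iff)
qed

lemma Dg_scale2: "Dg x (c *\<^sub>R a) b = c * Dg x a b"
proof -
  have "dd (\<lambda>q. g q (c *\<^sub>R a) b) p = dd (\<lambda>q. c * g q a b) p"
    by (rule dd_cong) (use apc.g_lin[OF apcq] dg in \<open>auto intro: differentiable_mult differentiable_const\<close>)
  also have "\<dots> = (\<lambda>x. c * Dg x a b)"
    by (rule dd_eq) (intro has_derivative_mult_right dd_works dg)
  finally show ?thesis by (simp add: fun_eq_iff)
qed

lemma Dg_lin2: "linear (\<lambda>a. Dg x a b)" by (rule linearI) (simp_all add: Dg_add2 Dg_scale2)
lemma Dg_add3: "Dg x a (b1 + b2) = Dg x a b1 + Dg x a b2" by (metis Dg_sym Dg_add2)
lemma Dg_scale3: "Dg x a (c *\<^sub>R b) = c * Dg x a b" by (metis Dg_sym Dg_scale2)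
lemma Dg_lin3: "linear (\<lambda>b. Dg x a b)" by (rule linearI) (simp_all add: Dg_add3 Dg_scale3)

lemma PP_add: "PP x (a1 + a2) = PP x a1 + PP x a2"
proof -
  have "dd (\<lambda>q. phi q (a1 + a2)) p = dd (\<lambda>q. phi q a1 + phi q a2) p"
    by (rule dd_cong) (use apc.phi_lin[OF apcq] dphi in \<open>auto intro: differentiable_add\<close>)
  also have "\<dots> = (\<lambda>x. PP x a1 + PP x a2)"
    by (rule dd_eq) (intro has_derivative_add dd_works dphi)
  finally show ?thesis by (simp add: fun_eq_iff)
qed

lemma PP_scale: "PP x (c *\<^sub>R a) = c *\<^sub>R PP x a"
proof -
  have "dd (\<lambda>q. phi q (c *\<^sub>R a)) p = dd (\<lambda>q. c *\<^sub>R phi q a) p"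
    by (rule dd_cong) (use apc.phi_lin[OF apcq] dphi in \<open>auto intro: differentiable_scaleR differentiable_const\<close>)
  also have "\<dots> = (\<lambda>x. c *\<^sub>R PP x a)"
    by (rule dd_eq) (intro has_derivative_scaleR_right dd_works dphi)
  finally show ?thesis by (simp add: fun_eq_iff)
qed

lemma PP_lin1: "linear (\<lambda>x. PP x a)"
  by (rule dd_linear[OF dphi])
lemma PP_lin2: "linear (PP x)" by (rule linearI) (simp_all add: PP_add PP_scale)
lemma Dxi_lin: "linear Dxi" using dd_linear[OF dxi] .


lemma deriv_eq_U:
  assumes "\<And>q. q \<in> U \<Longrightarrow> f q = f' q" "(f has_derivative D1) (at p)" "(f' has_derivative D2) (at p)"
  shows "D1 = D2"
  using dd_local[OF oU pU assms(1) assms(2)] dd_eq[OF assms(3)] by simp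

lemma Dg1_rules: "Dg (x1 + x2) a b = Dg x1 a b + Dg x2 a b" "Dg (c *\<^sub>R x) a b = c * Dg x a b" "Dg 0 a b = 0"
  using Dg_lin1[of a b] by (simp_all add: linear_add linear_scale linear_0)

lemma Dg_rules: "Dg x (a1 + a2) b = Dg x a1 b + Dg x a2 b" "Dg x (c *\<^sub>R a) b = c * Dg x a b"
  "Dg x a (b1 + b2) = Dg x a b1 + Dg x a b2" "Dg x a (c *\<^sub>R b) = c * Dg x a b"
  "Dg x 0 b = 0" "Dg x a 0 = 0"
  using Dg_add2 Dg_scale2 Dg_add3 Dg_scale3 Dg_scale2[where c=0] Dg_scale3[where c=0] by simp_all

lemma Gam_ex: "\<exists>!w. \<forall>z. 2 * g p w z = Dg x y z + Dg y x z - Dg z x y"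
proof -
  have lin: "linear (\<lambda>z. (Dg x y z + Dg y x z - Dg z x y) / 2)"
    by (intro linearI) (simp_all add: Dg_rules Dg1_rules algebra_simps add_divide_distrib diff_divide_distrib)
  obtain w where w: "\<forall>z. g p w z = (Dg x y z + Dg y x z - Dg z x y) / 2" using A.riesz[OF lin] by blast
  show ?thesis
  proof (rule ex1I[of _ w])
    show "\<forall>z. 2 * g p w z = Dg x y z + Dg y x z - Dg z x y"
    proof
      fix z
      have "g p w z = (Dg x y z + Dg y x z - Dg z x y) / 2" using w by blast
      then show "2 * g p w z = Dg x y z + Dg y x z - Dg z x y" by simp
    qed
    fix w' assume h: "\<forall>z. 2 * g p w' z = Dg x y z + Dg y x z - Dg z x y"
    have "g p (w' - w) z = 0" for z
    proof -
      have a: "2 * g p w' z = Dg x y z + Dg y x z - Dg z x y" using h by blast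
      have b: "g p w z = (Dg x y z + Dg y x z - Dg z x y) / 2" using w by blast
      show ?thesis using a b by simp
    qed
    then show "w' = w" using A.nondeg[of "w' - w"] by simp
  qed
qed

lemma Gam_spec: "2 * g p (Gam x y) z = Dg x y z + Dg y x z - Dg z x y"
proof -
  have "\<forall>z. 2 * g p (Gam x y) z = Dg x y z + Dg y x z - Dg z x y"
    unfolding christoffel_def by (rule theI'[OF Gam_ex])
  then show ?thesis by blast
qed

lemma Gam_eqI: assumes "\<And>z. 2 * g p w z = Dg x y z + Dg y x z - Dg z x y" shows "Gam x y = w"
  unfolding christoffel_def by (rule the1_equality[OF Gam_ex]) (use assms in blast)

lemma Gam_sym: "Gam x y = Gam y x"
proof (rule Gam_eqI)
  fix z
  have "Dg z y x = Dg z x y" by (rule Dg_sym)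
  then show "2 * g p (Gam y x) z = Dg x y z + Dg y x z - Dg z x y" by (simp add: Gam_spec)
qed

lemma Gam_add1: "Gam (x1 + x2) y = Gam x1 y + Gam x2 y"
  by (rule Gam_eqI) (simp add: Gam_spec Dg1_rules Dg_rules algebra_simps)
lemma Gam_scale1: "Gam (c *\<^sub>R x) y = c *\<^sub>R Gam x y"
  by (rule Gam_eqI) (simp add: Gam_spec Dg1_rules Dg_rules algebra_simps)
lemma Gam_add2: "Gam x (y1 + y2) = Gam x y1 + Gam x y2"
  using Gam_add1 Gam_sym by metis
lemma Gam_scale2: "Gam x (c *\<^sub>R y) = c *\<^sub>R Gam x y"
  using Gam_scale1 Gam_sym by metis
lemma Gam_lin1: "linear (\<lambda>x. Gam x y)" by (rule linearI) (simp_all add: Gam_add1 Gam_scale1)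
lemma Gam_lin2: "linear (Gam x)" by (rule linearI) (simp_all add: Gam_add2 Gam_scale2)
lemma Gam_rules: "Gam x (y1 - y2) = Gam x y1 - Gam x y2" "Gam x 0 = 0" "Gam (x1 - x2) y = Gam x1 y - Gam x2 y" "Gam 0 y = 0"
  using linear_diff[OF Gam_lin2[of x], of y1 y2] linear_0[OF Gam_lin2[of x]]
    linear_diff[OF Gam_lin1[of y], of x1 x2] linear_0[OF Gam_lin1[of y]] by simp_all

lemma MC: "Dg x a b = g p (Gam x a) b + g p a (Gam x b)"
proof -
  have "2 * g p (Gam x a) b + 2 * g p (Gam x b) a = 2 * Dg x a b"
    using Dg_sym[where x=x and a=b and b=a] by (simp add: Gam_spec)
  then show ?thesis using A.g_sym[of a "Gam x b"] by simp
qed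

end


context dsetup begin

lemma PP1_rules: "PP (x1 + x2) a = PP x1 a + PP x2 a" "PP (c *\<^sub>R x) a = c *\<^sub>R PP x a"
  using PP_lin1[of a] by (simp_all add: linear_add linear_scale)
lemma Dxi_rules: "Dxi (x1 + x2) = Dxi x1 + Dxi x2" "Dxi (c *\<^sub>R x) = c *\<^sub>R Dxi x"
  using Dxi_lin by (simp_all add: linear_add linear_scale)

lemma zero_deriv:
  assumes "\<And>q. q \<in> U \<Longrightarrow> f q = c" "(f has_derivative D) (at p)"
  shows "D x = 0"
proof -
  have "D = (\<lambda>x. 0)" by (rule deriv_eq_U[where f'="\<lambda>q. c"]) (use assms in \<open>auto intro: has_derivative_const\<close>)
  then show ?thesis by simp
qed

lemma dphi_hd: "((\<lambda>q. phi q y) has_derivative (\<lambda>x. PP x y)) (at p)"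
  using dd_works[OF dphi] by simp
lemma dxi_hd: "(xi has_derivative Dxi) (at p)"
  using dd_works[OF dxi] by simp

lemma SKd: "Dg x (phi p y) z + g p (PP x y) z + Dg x y (phi p z) + g p y (PP x z) = 0"
proof -
  have d1: "((\<lambda>q. g q (phi q y) z) has_derivative (\<lambda>x. Dg x (phi p y) z + g p (PP x y) z + g p (phi p y) 0)) (at p)"
    using PR_g[OF oU pU g_linq(1) g_linq(2) dg dphi_hd has_derivative_const] by simp
  have d2: "((\<lambda>q. g q y (phi q z)) has_derivative (\<lambda>x. Dg x y (phi p z) + g p 0 (phi p z) + g p y (PP x z))) (at p)"
    using PR_g[OF oU pU g_linq(1) g_linq(2) dg has_derivative_const dphi_hd] by simp
  have "(\<lambda>x. Dg x (phi p y) z + g p (PP x y) z + g p (phi p y) 0 + (Dg x y (phi p z) + g p 0 (phi p z) + g p y (PP x z))) x = 0"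
    by (rule zero_deriv[OF _ has_derivative_add[OF d1 d2]]) (simp add: apc.g_phi_skew[OF apcq])
  then show ?thesis by simp
qed

lemma XId: "PP x (xi p) + phi p (Dxi x) = 0"
proof -
  have d: "((\<lambda>q. phi q (xi q)) has_derivative (\<lambda>x. PP x (xi p) + phi p (Dxi x))) (at p)"
    using PR_phi[OF oU pU phi_linq dphi dxi_hd] by simp
  show ?thesis by (rule zero_deriv[where c=0, OF _ d]) (simp add: apc.phi_xi[OF apcq])
qed

lemma NORMd: "Dg x (xi p) (xi p) + 2 * g p (Dxi x) (xi p) = 0"
proof -
  have d: "((\<lambda>q. g q (xi q) (xi q)) has_derivative (\<lambda>x. Dg x (xi p) (xi p) + g p (Dxi x) (xi p) + g p (xi p) (Dxi x))) (at p)"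
    using PR_g[OF oU pU g_linq(1) g_linq(2) dg dxi_hd dxi_hd] by simp
  have "Dg x (xi p) (xi p) + g p (Dxi x) (xi p) + g p (xi p) (Dxi x) = 0"
    by (rule zero_deriv[where c=1, OF _ d]) (simp add: apc.g_xi[OF apcq] apc.eta_xi[OF apcq])
  then show ?thesis using A.g_sym[of "xi p" "Dxi x"] by simp
qed

lemma PHI2d: "PP x (phi p y) = - phi p (PP x y) - dd (\<lambda>q. eta q y) p x *\<^sub>R xi p - eta p y *\<^sub>R Dxi x"
proof -
  have d1: "((\<lambda>q. phi q (phi q y)) has_derivative (\<lambda>x. PP x (phi p y) + phi p (PP x y))) (at p)"
    using PR_phi[OF oU pU phi_linq dphi dphi_hd] by simp
  have d2: "((\<lambda>q. y - eta q y *\<^sub>R xi q) has_derivative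
      (\<lambda>x. 0 - (eta p y *\<^sub>R Dxi x + dd (\<lambda>q. eta q y) p x *\<^sub>R xi p))) (at p)"
    by (intro has_derivative_diff has_derivative_const has_derivative_scaleR dd_works deta dxi_hd)
  have "(\<lambda>x. PP x (phi p y) + phi p (PP x y)) = (\<lambda>x. 0 - (eta p y *\<^sub>R Dxi x + dd (\<lambda>q. eta q y) p x *\<^sub>R xi p))"
    by (rule deriv_eq_U[OF _ d1 d2]) (simp add: apc.phi_phi[OF apcq])
  then have e: "PP x (phi p y) + phi p (PP x y) = 0 - (eta p y *\<^sub>R Dxi x + dd (\<lambda>q. eta q y) p x *\<^sub>R xi p)"
    by (simp add: fun_eq_iff)
  have "PP x (phi p y) = (PP x (phi p y) + phi p (PP x y)) - phi p (PP x y)" by simp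
  also have "\<dots> = (0 - (eta p y *\<^sub>R Dxi x + dd (\<lambda>q. eta q y) p x *\<^sub>R xi p)) - phi p (PP x y)" by (simp only: e)
  finally have c: "PP x (phi p y) = (0 - (eta p y *\<^sub>R Dxi x + dd (\<lambda>q. eta q y) p x *\<^sub>R xi p)) - phi p (PP x y)" .
  show ?thesis by (subst c) (simp add: algebra_simps)
qed

end


context dsetup begin

abbreviation "FF \<equiv> struct_tensor g phi p"
definition "nx x = Dxi x + Gam x (xi p)"

lemma FF_eq: "FF x y z = g p (PP x y) z + g p (Gam x (phi p y)) z + g p (Gam x y) (phi p z)"
proof -
  have "dd (\<lambda>q. y) p x = 0" by (simp add: dd_const)
  then show ?thesis
    unfolding struct_tensor_def nabla_phi_def lc_nabla_def
    using A.g_phi_skew[of "Gam x y" z] by simp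
qed

lemma FF_sk: "FF x y z = - FF x z y"
proof -
  have s: "Dg x (phi p y) z + g p (PP x y) z + Dg x y (phi p z) + g p y (PP x z) = 0" by (rule SKd)
  have m1: "Dg x (phi p y) z = g p (Gam x (phi p y)) z + g p (phi p y) (Gam x z)" by (rule MC)
  have m2: "Dg x y (phi p z) = g p (Gam x y) (phi p z) + g p y (Gam x (phi p z))" by (rule MC)
  have y1: "g p y (PP x z) = g p (PP x z) y" by (rule A.g_sym)
  have y2: "g p (phi p y) (Gam x z) = g p (Gam x z) (phi p y)" by (rule A.g_sym)
  have y3: "g p y (Gam x (phi p z)) = g p (Gam x (phi p z)) y" by (rule A.g_sym)
  show ?thesis unfolding FF_eq using s m1 m2 y1 y2 y3 by linarith
qed

lemma eta_nx: "eta p (nx x) = 0"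
proof -
  have "Dg x (xi p) (xi p) = g p (Gam x (xi p)) (xi p) + g p (xi p) (Gam x (xi p))" by (rule MC)
  then have "Dg x (xi p) (xi p) = 2 * eta p (Gam x (xi p))" by simp
  then show ?thesis using NORMd[of x] by (simp add: nx_def)
qed

lemma FF_xi: "FF x y (xi p) = g p (phi p (nx x)) y"
proof -
  have "FF x (xi p) y = g p (PP x (xi p)) y + g p (Gam x (xi p)) (phi p y)"
    by (simp add: FF_eq Gam_rules)
  also have "PP x (xi p) = - phi p (Dxi x)" using XId[of x] by (simp add: eq_neg_iff_add_eq_0)
  finally have "FF x (xi p) y = - g p (phi p (nx x)) y"
    using A.g_phi_skew[of "Gam x (xi p)" y] by (simp add: nx_def)
  then show ?thesis using FF_sk[of x y "xi p"] by simp
qed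

lemma lie_eq: "lie_g g xi p x y = - (FF x (phi p y) (xi p) + FF y (phi p x) (xi p))"
proof -
  have "lie_g g xi p x y = Dg (xi p) x y + g p (Dxi x) y + g p x (Dxi y)"
    unfolding lie_g_def by simp
  also have "Dg (xi p) x y = g p (Gam x (xi p)) y + g p x (Gam y (xi p))"
    using MC[where x="xi p" and a=x and b=y] Gam_sym[of "xi p" x] Gam_sym[of "xi p" y] by simp
  finally have l: "lie_g g xi p x y = g p (nx x) y + g p (nx y) x"
    using A.g_sym[of x "nx y"] A.g_sym[of x "Dxi y"] A.g_sym[of x "Gam y (xi p)"] by (simp add: nx_def)
  have f1: "FF x (phi p y) (xi p) = - g p (nx x) y" using eta_nx[of x] by (simp add: FF_xi)
  have f2: "FF y (phi p x) (xi p) = - g p (nx y) x" using eta_nx[of y] by (simp add: FF_xi)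
  show ?thesis using l f1 f2 by simp
qed

lemma FF_fs: "FF x y z = FF x (phi p y) (phi p z) - eta p y * FF x z (xi p) + eta p z * FF x y (xi p)"
proof -
  have e1: "FF x (phi p y) (phi p z) = g p (PP x (phi p y)) (phi p z) + g p (Gam x (phi p (phi p y))) (phi p z)
      + g p (Gam x (phi p y)) (phi p (phi p z))" by (rule FF_eq)
  have e2: "FF x y z = g p (PP x y) z + g p (Gam x (phi p y)) z + g p (Gam x y) (phi p z)" by (rule FF_eq)
  have e3: "FF x z (xi p) = g p (phi p (nx x)) z" by (rule FF_xi)
  have e4: "FF x y (xi p) = g p (PP x y) (xi p) + g p (Gam x (phi p y)) (xi p) + g p (Gam x y) (phi p (xi p))"
    by (rule FF_eq)
  show ?thesis
    by (simp only: e1 e2 e3 e4) (simp add: PHI2d A.g_phi_skew Gam_rules Gam_add2 Gam_scale2 nx_def algebra_simps)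
qed

lemma FF_tri: "trilinear FF"
  by (rule trilinearI) (simp_all add: FF_eq PP1_rules PP_add PP_scale Gam_add1 Gam_scale1 Gam_add2 Gam_scale2 algebra_simps)

lemma FF_Fspace: "Fspace (phi p) (xi p) (eta p) FF"
  unfolding Fspace_def using FF_tri FF_sk FF_fs by blast

end


theorem proposition2p2:
  fixes n :: nat and U :: "(real^'m) set"
    and g :: "real^'m \<Rightarrow> real^'m \<Rightarrow> real^'m \<Rightarrow> real"
    and phi :: "real^'m \<Rightarrow> real^'m \<Rightarrow> real^'m"
    and xi :: "real^'m \<Rightarrow> real^'m"
    and eta :: "real^'m \<Rightarrow> real^'m \<Rightarrow> real"
  assumes "n \<ge> 1" and "CARD('m) = 2 * n + 1" and "open U"
    and "\<forall>x y. smooth_on U (\<lambda>p. g p x y)"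
    and "\<forall>x i. smooth_on U (\<lambda>p. phi p x $ i)"
    and "\<forall>i. smooth_on U (\<lambda>p. xi p $ i)"
    and "\<forall>x. smooth_on U (\<lambda>p. eta p x)"
    and "\<forall>p\<in>U. apcm_point (g p) (phi p) (xi p) (eta p)"
  shows "killing_on U g xi \<longleftrightarrow>
    (\<forall>p\<in>U. in_class n (g p) (phi p) (xi p) (eta p) {1,2,3,4,5,8,9,11} (struct_tensor g phi p))"
proof -
  have key: "(\<forall>x y. lie_g g xi p x y = 0) \<longleftrightarrow>
      in_class n (g p) (phi p) (xi p) (eta p) {1,2,3,4,5,8,9,11} (struct_tensor g phi p)" if pU: "p \<in> U" for p
  proof -
    interpret D: dsetup n U g phi xi eta p
      by (unfold_locales) (use assms pU in auto)
    have "(\<forall>x y. lie_g g xi p x y = 0) \<longleftrightarrow>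
        (\<forall>x y. struct_tensor g phi p x (phi p y) (xi p) + struct_tensor g phi p y (phi p x) (xi p) = 0)"
      unfolding D.lie_eq by (simp only: neg_equal_0_iff_equal)
    also have "\<dots> \<longleftrightarrow> in_class n (g p) (phi p) (xi p) (eta p) {1,2,3,4,5,8,9,11} (struct_tensor g phi p)"
    proof
      assume "\<forall>x y. struct_tensor g phi p x (phi p y) (xi p) + struct_tensor g phi p y (phi p x) (xi p) = 0"
      then show "in_class n (g p) (phi p) (xi p) (eta p) {1,2,3,4,5,8,9,11} (struct_tensor g phi p)"
        by (rule D.A.Kil_in_class[OF D.FF_Fspace])
    next
      assume "in_class n (g p) (phi p) (xi p) (eta p) {1,2,3,4,5,8,9,11} (struct_tensor g phi p)"
      then show "\<forall>x y. struct_tensor g phi p x (phi p y) (xi p) + struct_tensor g phi p y (phi p x) (xi p) = 0"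
        by (rule D.A.in_class_K)
    qed
    finally show ?thesis .
  qed
  show ?thesis unfolding killing_on_def using key by blast
qed

end
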